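(* Assume Condition (C1) holds with $\alpha\in(0,1]$. If there exists $m\in\mathbb{N}_+$ such that $$\liminf_{n\to\infty}\frac{\Phi_\Lambda(n)-\Phi_\mu(n)}{\prod_{\ell=0}^m\log^{(\ell)}n}>-\infty,$$ then the block-counting process $N$ does not explode.
   Context: Setting: $\mathbb{N}_+=\{1,2,\dots\}$, $\bar{\mathbb{N}}_+=\mathbb{N}_+\cup\{\infty\}$. $\Lambda$ is a finite measure on $[0,1]$ with $\Lambda(\{1\})=0$, absolutely continuous w.r.t. Lebesgue measure. For $2\le k\le n$, $\lambda_{n,k}=\int_{[0,1]}x^{k-2}(1-x)^{n-k}\Lambda(dx)$ and $\Phi_\Lambda(n)=\sum_{k=2}^n\binom nk\lambda_{n,k}(k-1)$. $\mu$ is a finite measure on $\mathbb{N}_+$ (splitting measure; $\mu(k):=\mu(\{k\})$) and $\Phi_\mu(n)=n\sum_{k=1}^n k\mu(k)$. $N=(N_t)_{t\ge0}$ is the block-counting process ($N_t$ = number of blocks) of a simple exchangeable fragmentation–coagulation process on partitions of $\mathbb{N}_+$, whose coagulations are those of the $\Lambda$-coalescent (no simultaneous multiple mergers) and whose fragmentations occur at finite rate, each splitting one block into $k+1$ infinite blocks with the image of the fragmentation measure under $\pi\mapsto\#\pi-1$ equal to $\mu$. Started from $n\in\mathbb{N}_+$ and up to $\tau^+_\infty=\inf\{t>0:N_{t-}=\infty\}$, $N$ is the continuous-time Markov chain on $\mathbb{N}_+$ jumping from $n$ to $n-k+1$ at rate $\binom nk\lambda_{n,k}$ ($2\le k\le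 n$) and from $n$ to $n+k$ at rate $n\mu(k)$ ($k\ge1$). Explosion: $N$ explodes if, started from any finite $N_0$, $\mathbf{P}(N_t=\infty\text{ for some }t>0)=1$; otherwise it does not explode. Condition (C1): $\mu(n)\sim b(\log n)^\alpha n^{-2}$ as $n\to\infty$ for constants $b>0,\alpha>0$. $\log^{(\ell)}$ denotes the $\ell$-fold iterated natural logarithm, with $\log^{(0)}n=n$. *)

theory Defs
  imports "HOL-Probability.Probability"
begin

definition lam_coef :: "real measure \<Rightarrow> nat \<Rightarrow> nat \<Rightarrow> real" where
  "lam_coef Lam n k = (LINT x:{0..1}|Lam. x ^ (k - 2) * (1 - x) ^ (n - k))"

definition Phi_Lam :: "real measure \<Rightarrow> nat \<Rightarrow> real" where
  "Phi_Lam Lam n = (\<Sum>k=2..n. real (n choose k) * lam_coef Lam n k * (real k - 1))"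

text \<open>The splitting measure mu on N_+ is given by its point masses mu k (k >= 1).\<close>
definition Phi_mu :: "(nat \<Rightarrow> real) \<Rightarrow> nat \<Rightarrow> real" where
  "Phi_mu mu n = real n * (\<Sum>k=1..n. real k * mu k)"

definition bc_rate :: "real measure \<Rightarrow> (nat \<Rightarrow> real) \<Rightarrow> nat \<Rightarrow> nat \<Rightarrow> real" where
  "bc_rate Lam mu n m =
     (if 1 \<le> m \<and> m < n then real (n choose (n - m + 1)) * lam_coef Lam n (n - m + 1)
      else if n < m then real n * mu (m - n) else 0)"

definition bc_total_rate :: "real measure \<Rightarrow> (nat \<Rightarrow> real) \<Rightarrow> nat \<Rightarrow> real" where
  "bc_total_rate Lam mu n =
     (\<Sum>k=2..n. real (n choose k) * lam_coef Lam n k) + real n * (\<Sum>k. mu (Suc k))"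

definition bc_jump_prob :: "real measure \<Rightarrow> (nat \<Rightarrow> real) \<Rightarrow> nat \<Rightarrow> nat \<Rightarrow> real" where
  "bc_jump_prob Lam mu n m =
     (if bc_total_rate Lam mu n > 0 then bc_rate Lam mu n m / bc_total_rate Lam mu n
      else if m = n then 1 else 0)"

text \<open>(M, X, E) realizes the block-counting process started at n0 (standard jump-chain /
  holding-time construction): X is the embedded jump chain started at n0, E k are i.i.d.
  Exp(1) variables independent of X, and the k-th holding time is E k / q(X k).\<close>
definition bc_realization ::
  "real measure \<Rightarrow> (nat \<Rightarrow> real) \<Rightarrow> nat \<Rightarrow> 'w measure \<Rightarrow> (nat \<Rightarrow> 'w \<Rightarrow> nat) \<Rightarrow> (nat \<Rightarrow> 'w \<Rightarrow> real) \<Rightarrow> bool"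
where
  "bc_realization Lam mu n0 M X E \<longleftrightarrow>
     prob_space M \<and>
     (\<forall>k. X k \<in> M \<rightarrow>\<^sub>M count_space UNIV) \<and>
     (\<forall>k. E k \<in> borel_measurable M) \<and>
     (\<forall>k xs. length xs = Suc k \<longrightarrow>
        measure M {\<omega> \<in> space M. \<forall>i\<le>k. X i \<omega> = xs ! i} =
          (if xs ! 0 = n0 then 1 else 0) * (\<Prod>i<k. bc_jump_prob Lam mu (xs ! i) (xs ! Suc i))) \<and>
     (\<forall>k. distributed M lborel (E k) (\<lambda>x. ennreal (exponential_density 1 x))) \<and>
     prob_space.indep_vars M (\<lambda>_. borel) E UNIV \<and>
     prob_space.indep_var M (PiM UNIV (\<lambda>_. count_space UNIV)) (\<lambda>\<omega> k. X k \<omega>)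
                           (PiM UNIV (\<lambda>_. borel)) (\<lambda>\<omega> k. E k \<omega>)"

text \<open>Explosion on the path omega: the explosion time tau = sum of all holding times is finite.\<close>
definition bc_explodes_on ::
  "real measure \<Rightarrow> (nat \<Rightarrow> real) \<Rightarrow> (nat \<Rightarrow> 'w \<Rightarrow> nat) \<Rightarrow> (nat \<Rightarrow> 'w \<Rightarrow> real) \<Rightarrow> 'w \<Rightarrow> bool"
where
  "bc_explodes_on Lam mu X E \<omega> \<longleftrightarrow>
     (\<forall>k. bc_total_rate Lam mu (X k \<omega>) > 0) \<and>
     summable (\<lambda>k. E k \<omega> / bc_total_rate Lam mu (X k \<omega>))"

text \<open>N explodes: started from any finite N_0 >= 1, explosion happens with probability 1.
  M n0, X n0, E n0 is the realization of the process started from n0.\<close>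
definition bc_explodes ::
  "real measure \<Rightarrow> (nat \<Rightarrow> real) \<Rightarrow> (nat \<Rightarrow> 'w measure) \<Rightarrow> (nat \<Rightarrow> nat \<Rightarrow> 'w \<Rightarrow> nat)
     \<Rightarrow> (nat \<Rightarrow> nat \<Rightarrow> 'w \<Rightarrow> real) \<Rightarrow> bool"
where
  "bc_explodes Lam mu M X E \<longleftrightarrow>
     (\<forall>n0\<ge>1. measure (M n0) {\<omega> \<in> space (M n0). bc_explodes_on Lam mu (X n0) (E n0) \<omega>} = 1)"

end

theory Submission
  imports Defs
begin

lemma map_upt_eq_iff: "map g [0..<n] = xs \<longleftrightarrow> (length xs = n \<and> (\<forall>i<n. xs ! i = g i))"
  unfolding list_eq_iff_nth_eq by auto

lemma map_upt_meas:
  fixes f :: "nat \<Rightarrow> 'a \<Rightarrow> nat"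
  assumes "\<And>i. f i \<in> measurable N (count_space UNIV)"
  shows "(\<lambda>\<omega>. map (\<lambda>i. f i \<omega>) [0..<Suc k]) \<in> measurable N (count_space UNIV)"
proof (subst measurable_count_space_eq2_countable, intro conjI ballI)
  show "(\<lambda>\<omega>. map (\<lambda>i. f i \<omega>) [0..<Suc k]) \<in> space N \<rightarrow> UNIV" by simp
  fix xs :: "nat list"
  have eq: "(\<lambda>\<omega>. map (\<lambda>i. f i \<omega>) [0..<Suc k]) -` {xs} \<inter> space N =
     (if length xs = Suc k then (\<Inter>i\<in>{..k}. f i -` {xs ! i} \<inter> space N) \<inter> space N else {})"
    using map_upt_eq_iff[of "\<lambda>i. f i _" "Suc k" xs] by (auto simp add: less_Suc_eq_le simp del: upt_Suc)
  show "(\<lambda>\<omega>. map (\<lambda>i. f i \<omega>) [0..<Suc k]) -` {xs} \<inter> space N \<in> sets N"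
  proof -
    have "(\<Inter>i\<in>{..k}. f i -` {xs ! i} \<inter> space N) \<in> sets N"
      by (intro sets.finite_INT measurable_sets[OF assms]) auto
    moreover have "(\<Inter>i\<in>{..k}. f i -` {xs ! i} \<inter> space N) \<inter> space N = (\<Inter>i\<in>{..k}. f i -` {xs ! i} \<inter> space N)"
      by auto
    ultimately show ?thesis unfolding eq by simp
  qed
qed

lemma decomp_nat:
  fixes U :: "'a \<Rightarrow> nat" and h :: "'a \<Rightarrow> ennreal"
  assumes U: "U \<in> measurable M (count_space UNIV)" and h: "h \<in> borel_measurable M"
  shows "(\<integral>\<^sup>+\<omega>. h \<omega> \<partial>M) = (\<Sum>i. \<integral>\<^sup>+\<omega>. h \<omega> * indicator {\<omega>\<in>space M. U \<omega> = i} \<omega> \<partial>M)"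
proof -
  have "(\<integral>\<^sup>+\<omega>. h \<omega> \<partial>M) = (\<integral>\<^sup>+\<omega>. (\<Sum>i. h \<omega> * indicator {\<omega>\<in>space M. U \<omega> = i} \<omega>) \<partial>M)"
  proof (rule nn_integral_cong)
    fix \<omega> assume "\<omega> \<in> space M"
    then have "(\<Sum>i. h \<omega> * indicator {\<omega>\<in>space M. U \<omega> = i} \<omega>) = (\<Sum>i\<in>{U \<omega>}. h \<omega> * indicator {\<omega>\<in>space M. U \<omega> = i} \<omega>)"
      by (intro suminf_finite) auto
    then show "h \<omega> = (\<Sum>i. h \<omega> * indicator {\<omega>\<in>space M. U \<omega> = i} \<omega>)"
      using \<open>\<omega> \<in> space M\<close> by simp
  qed
  also have "\<dots> = (\<Sum>i. \<integral>\<^sup>+\<omega>. h \<omega> * indicator {\<omega>\<in>space M. U \<omega> = i} \<omega> \<partial>M)"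
  proof (rule nn_integral_suminf)
    fix i
    have "{\<omega>\<in>space M. U \<omega> = i} = U -` {i} \<inter> space M" by auto
    then have "{\<omega>\<in>space M. U \<omega> = i} \<in> sets M" using U by (simp add: measurable_sets)
    then show "(\<lambda>\<omega>. h \<omega> * indicator {\<omega>\<in>space M. U \<omega> = i} \<omega>) \<in> borel_measurable M"
      using h by measurable
  qed
  finally show ?thesis .
qed

locale bcchain = prob_space M for M :: "'w measure" +
  fixes X :: "nat \<Rightarrow> 'w \<Rightarrow> nat" and E :: "nat \<Rightarrow> 'w \<Rightarrow> real"
    and p :: "nat \<Rightarrow> nat \<Rightarrow> real" and n0 :: nat
  assumes Xm: "\<And>k. X k \<in> M \<rightarrow>\<^sub>M count_space UNIV"
    and Em: "\<And>k. E k \<in> borel_measurable M"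
    and fdd: "\<And>k xs. length xs = Suc k \<Longrightarrow>
        measure M {\<omega> \<in> space M. \<forall>i\<le>k. X i \<omega> = xs ! i} =
          (if xs ! 0 = n0 then 1 else 0) * (\<Prod>i<k. p (xs ! i) (xs ! Suc i))"
    and Edist: "\<And>k. distributed M lborel (E k) (\<lambda>x. ennreal (exponential_density 1 x))"
    and Eindep: "indep_vars (\<lambda>_. borel) E UNIV"
    and XEindep: "indep_var (PiM UNIV (\<lambda>_. count_space (UNIV::real set))) (\<lambda>\<omega> k. real (X k \<omega>))
                           (PiM UNIV (\<lambda>_. borel)) (\<lambda>\<omega> k. E k \<omega>)"
    and p_nonneg: "\<And>x y. 0 \<le> p x y"
begin

definition pre :: "nat \<Rightarrow> 'w \<Rightarrow> nat list" where
  "pre k \<omega> = map (\<lambda>i. X i \<omega>) [0..<Suc k]"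

lemma pre_meas: "pre k \<in> measurable M (count_space UNIV)"
  unfolding pre_def by (rule map_upt_meas[OF Xm])

lemma U_meas: "(\<lambda>\<omega>. to_nat (pre k \<omega>)) \<in> measurable M (count_space UNIV)"
  by (rule measurable_compose[OF pre_meas]) simp

lemma pre_sets: "{\<omega>\<in>space M. pre k \<omega> = xs} \<in> sets M"
proof -
  have "{\<omega>\<in>space M. pre k \<omega> = xs} = pre k -` {xs} \<inter> space M" by auto
  then show ?thesis using measurable_sets[OF pre_meas] by simp
qed

lemma Xsets: "{\<omega>\<in>space M. X k \<omega> = y} \<in> sets M"
proof -
  have "{\<omega>\<in>space M. X k \<omega> = y} = X k -` {y} \<inter> space M" by auto
  then show ?thesis using measurable_sets[OF Xm] by simp
qed

lemma pre_set: "length xs = Suc k \<Longrightarrow> {\<omega>\<in>space M. pre k \<omega> = xs} = {\<omega>\<in>space M. \<forall>i\<le>k. X i \<omega> = xs!i}"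
  unfolding pre_def using map_upt_eq_iff[of "\<lambda>i. X i _" "Suc k" xs]
  by (auto simp add: less_Suc_eq_le simp del: upt_Suc)

lemma pre_set_empty: "length xs \<noteq> Suc k \<Longrightarrow> {\<omega>\<in>space M. pre k \<omega> = xs} = {}"
  unfolding pre_def by auto

lemma pre_prob: "length xs = Suc k \<Longrightarrow> measure M {\<omega>\<in>space M. pre k \<omega> = xs} =
   (if xs ! 0 = n0 then 1 else 0) * (\<Prod>i<k. p (xs ! i) (xs ! Suc i))"
  using pre_set fdd by simp

lemma pre_Suc: "pre (Suc k) \<omega> = pre k \<omega> @ [X (Suc k) \<omega>]"
  by (simp add: pre_def)

lemma pre_nth: "j \<le> k \<Longrightarrow> pre k \<omega> ! j = X j \<omega>"
  unfolding pre_def by (simp del: upt_Suc add: nth_map_upt)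

lemma markov_set: "{\<omega>\<in>space M. pre k \<omega> = xs \<and> X (Suc k) \<omega> = y} = {\<omega>\<in>space M. pre (Suc k) \<omega> = xs @ [y]}"
  by (auto simp: pre_Suc)

lemma markov_prob:
  assumes "length xs = Suc k"
  shows "measure M {\<omega>\<in>space M. pre (Suc k) \<omega> = xs @ [y]} = measure M {\<omega>\<in>space M. pre k \<omega> = xs} * p (xs!k) y"
proof -
  have a: "(xs @ [y]) ! 0 = xs ! 0" using assms by (simp add: nth_append)
  have b: "(\<Prod>i<Suc k. p ((xs @ [y]) ! i) ((xs @ [y]) ! Suc i)) = (\<Prod>i<k. p (xs ! i) (xs ! Suc i)) * p (xs!k) y"
    using assms by (simp add: nth_append)
  show ?thesis using pre_prob[OF assms] pre_prob[of "xs @ [y]" "Suc k"] assms a b by simp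
qed

lemma U_set: "{\<omega>\<in>space M. to_nat (pre k \<omega>) = i} = (if i \<in> range (to_nat :: nat list \<Rightarrow> nat) then {\<omega>\<in>space M. pre k \<omega> = from_nat i} else {})"
  by auto

lemma decomp_pre:
  assumes "h \<in> borel_measurable M"
  shows "(\<integral>\<^sup>+\<omega>. h \<omega> \<partial>M) = (\<Sum>i. \<integral>\<^sup>+\<omega>. h \<omega> * indicator {\<omega>\<in>space M. to_nat (pre k \<omega>) = i} \<omega> \<partial>M)"
  by (rule decomp_nat[OF U_meas assms])

end

context bcchain begin

lemmas [measurable] = Xm Em pre_sets Xsets pre_meas

lemma on_pre: "\<omega> \<in> {\<omega>\<in>space M. pre k \<omega> = xs} \<Longrightarrow> j \<le> k \<Longrightarrow> X j \<omega> = xs ! j"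
  using pre_nth[of j k \<omega>] by auto

lemma piece_W:
  fixes W :: "nat \<Rightarrow> real"
  assumes len: "length xs = Suc k" and Wnn: "\<And>x. 0 \<le> W x"
  shows "(\<integral>\<^sup>+\<omega>. ennreal (W (X (Suc k) \<omega>)) * indicator {\<omega>\<in>space M. pre k \<omega> = xs} \<omega> \<partial>M) =
     ennreal (measure M {\<omega>\<in>space M. pre k \<omega> = xs}) * (\<Sum>y. ennreal (p (xs!k) y) * ennreal (W y))"
proof -
  let ?A = "{\<omega>\<in>space M. pre k \<omega> = xs}"
  have "(\<integral>\<^sup>+\<omega>. ennreal (W (X (Suc k) \<omega>)) * indicator ?A \<omega> \<partial>M) =
      (\<Sum>y. \<integral>\<^sup>+\<omega>. ennreal (W (X (Suc k) \<omega>)) * indicator ?A \<omega> * indicator {\<omega>\<in>space M. X (Suc k) \<omega> = y} \<omega> \<partial>M)"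
    by (rule decomp_nat[OF Xm]) measurable
  also have "\<dots> = (\<Sum>y. ennreal (W y) * emeasure M {\<omega>\<in>space M. pre (Suc k) \<omega> = xs @ [y]})"
  proof (rule suminf_cong)
    fix y
    have "(\<integral>\<^sup>+\<omega>. ennreal (W (X (Suc k) \<omega>)) * indicator ?A \<omega> * indicator {\<omega>\<in>space M. X (Suc k) \<omega> = y} \<omega> \<partial>M)
       = (\<integral>\<^sup>+\<omega>. ennreal (W y) * indicator {\<omega>\<in>space M. pre (Suc k) \<omega> = xs @ [y]} \<omega> \<partial>M)"
      by (intro nn_integral_cong) (auto simp: pre_Suc indicator_def)
    also have "\<dots> = ennreal (W y) * emeasure M {\<omega>\<in>space M. pre (Suc k) \<omega> = xs @ [y]}"
      by (rule nn_integral_cmult_indicator) measurable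
    finally show "(\<integral>\<^sup>+\<omega>. ennreal (W (X (Suc k) \<omega>)) * indicator ?A \<omega> * indicator {\<omega>\<in>space M. X (Suc k) \<omega> = y} \<omega> \<partial>M)
       = ennreal (W y) * emeasure M {\<omega>\<in>space M. pre (Suc k) \<omega> = xs @ [y]}" .
  qed
  also have "\<dots> = (\<Sum>y. ennreal (measure M ?A) * (ennreal (p (xs!k) y) * ennreal (W y)))"
  proof (rule suminf_cong)
    fix y
    have "emeasure M {\<omega>\<in>space M. pre (Suc k) \<omega> = xs @ [y]} = ennreal (measure M ?A * p (xs!k) y)"
      using markov_prob[OF len] by (simp add: emeasure_eq_measure)
    then show "ennreal (W y) * emeasure M {\<omega>\<in>space M. pre (Suc k) \<omega> = xs @ [y]} =
        ennreal (measure M ?A) * (ennreal (p (xs!k) y) * ennreal (W y))"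
      using p_nonneg by (simp add: ennreal_mult' mult_ac)
  qed
  also have "\<dots> = ennreal (measure M ?A) * (\<Sum>y. ennreal (p (xs!k) y) * ennreal (W y))"
    by (rule ennreal_suminf_cmult)
  finally show ?thesis .
qed

lemma super_step:
  fixes W \<rho> :: "nat \<Rightarrow> real"
  assumes Wnn: "\<And>x. 0 \<le> W x" and rnn: "\<And>x. 0 \<le> \<rho> x"
    and super: "\<And>x. ennreal (\<rho> x) * (\<Sum>y. ennreal (p x y) * ennreal (W y)) \<le> ennreal (W x)"
  shows "(\<integral>\<^sup>+\<omega>. ennreal ((\<Prod>j<Suc k. \<rho> (X j \<omega>)) * W (X (Suc k) \<omega>)) \<partial>M)
      \<le> (\<integral>\<^sup>+\<omega>. ennreal ((\<Prod>j<k. \<rho> (X j \<omega>)) * W (X k \<omega>)) \<partial>M)"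
proof -
  let ?f1 = "\<lambda>\<omega>. ennreal ((\<Prod>j<Suc k. \<rho> (X j \<omega>)) * W (X (Suc k) \<omega>))"
  let ?f0 = "\<lambda>\<omega>. ennreal ((\<Prod>j<k. \<rho> (X j \<omega>)) * W (X k \<omega>))"
  have "(\<integral>\<^sup>+\<omega>. ?f1 \<omega> \<partial>M) = (\<Sum>i. \<integral>\<^sup>+\<omega>. ?f1 \<omega> * indicator {\<omega>\<in>space M. to_nat (pre k \<omega>) = i} \<omega> \<partial>M)"
    by (rule decomp_pre) measurable
  also have "\<dots> \<le> (\<Sum>i. \<integral>\<^sup>+\<omega>. ?f0 \<omega> * indicator {\<omega>\<in>space M. to_nat (pre k \<omega>) = i} \<omega> \<partial>M)"
  proof (rule suminf_le)
    fix i
    show "(\<integral>\<^sup>+\<omega>. ?f1 \<omega> * indicator {\<omega>\<in>space M. to_nat (pre k \<omega>) = i} \<omega> \<partial>M)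
        \<le> (\<integral>\<^sup>+\<omega>. ?f0 \<omega> * indicator {\<omega>\<in>space M. to_nat (pre k \<omega>) = i} \<omega> \<partial>M)"
    proof (cases "i \<in> range (to_nat :: nat list \<Rightarrow> nat)")
      case False
      then show ?thesis by (simp add: U_set)
    next
      case True
      then obtain xs :: "nat list" where i: "i = to_nat xs" by auto
      let ?A = "{\<omega>\<in>space M. pre k \<omega> = xs}"
      have setA: "{\<omega>\<in>space M. to_nat (pre k \<omega>) = i} = ?A" using i by auto
      show ?thesis
      proof (cases "length xs = Suc k")
        case False
        then show ?thesis unfolding setA using pre_set_empty by simp
      next
        case len: True
        have "(\<integral>\<^sup>+\<omega>. ?f1 \<omega> * indicator ?A \<omega> \<partial>M) =
            (\<integral>\<^sup>+\<omega>. ennreal (\<Prod>j<Suc k. \<rho> (xs ! j)) * (ennreal (W (X (Suc k) \<omega>)) * indicator ?A \<omega>) \<partial>M)"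
        proof (intro nn_integral_cong)
          fix \<omega> assume "\<omega> \<in> space M"
          show "?f1 \<omega> * indicator ?A \<omega> = ennreal (\<Prod>j<Suc k. \<rho> (xs ! j)) * (ennreal (W (X (Suc k) \<omega>)) * indicator ?A \<omega>)"
          proof (cases "\<omega> \<in> ?A")
            case True
            then have "(\<Prod>j<Suc k. \<rho> (X j \<omega>)) = (\<Prod>j<Suc k. \<rho> (xs ! j))"
              using on_pre[OF True] by (intro prod.cong) auto
            then show ?thesis using True rnn Wnn by (simp add: ennreal_mult' prod_nonneg)
          qed simp
        qed
        also have "\<dots> = ennreal (\<Prod>j<Suc k. \<rho> (xs ! j)) * (ennreal (measure M ?A) * (\<Sum>y. ennreal (p (xs!k) y) * ennreal (W y)))"
          using piece_W[where W=W, OF len Wnn] by (subst nn_integral_cmult) auto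
        also have "\<dots> = ennreal (\<Prod>j<k. \<rho> (xs ! j)) * ennreal (measure M ?A) * (ennreal (\<rho> (xs!k)) * (\<Sum>y. ennreal (p (xs!k) y) * ennreal (W y)))"
          using rnn by (simp add: ennreal_mult' prod_nonneg mult_ac)
        also have "\<dots> \<le> ennreal (\<Prod>j<k. \<rho> (xs ! j)) * ennreal (measure M ?A) * ennreal (W (xs!k))"
          by (intro mult_left_mono super) auto
        also have "\<dots> = (\<integral>\<^sup>+\<omega>. ennreal ((\<Prod>j<k. \<rho> (xs ! j)) * W (xs ! k)) * indicator ?A \<omega> \<partial>M)"
          using rnn Wnn by (subst nn_integral_cmult_indicator) (auto simp: emeasure_eq_measure ennreal_mult' prod_nonneg mult_ac)
        also have "\<dots> = (\<integral>\<^sup>+\<omega>. ?f0 \<omega> * indicator ?A \<omega> \<partial>M)"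
        proof (intro nn_integral_cong)
          fix \<omega> assume "\<omega> \<in> space M"
          show "ennreal ((\<Prod>j<k. \<rho> (xs ! j)) * W (xs ! k)) * indicator ?A \<omega> = ?f0 \<omega> * indicator ?A \<omega>"
          proof (cases "\<omega> \<in> ?A")
            case True
            then have "(\<Prod>j<k. \<rho> (X j \<omega>)) = (\<Prod>j<k. \<rho> (xs ! j))"
              using on_pre[OF True] by (intro prod.cong) auto
            moreover have "X k \<omega> = xs ! k" using on_pre[OF True] by auto
            ultimately show ?thesis using True by simp
          qed simp
        qed
        finally show ?thesis unfolding setA .
      qed
    qed
  qed (auto intro: summableI)
  also have "\<dots> = (\<integral>\<^sup>+\<omega>. ?f0 \<omega> \<partial>M)"
    by (rule decomp_pre[symmetric]) measurable
  finally show ?thesis .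
qed

lemma X0_prob: "measure M {\<omega>\<in>space M. X 0 \<omega> = y} = (if y = n0 then 1 else 0)"
  using fdd[of "[y]" 0] by simp

lemma super_all:
  fixes W \<rho> :: "nat \<Rightarrow> real"
  assumes Wnn: "\<And>x. 0 \<le> W x" and rnn: "\<And>x. 0 \<le> \<rho> x"
    and super: "\<And>x. ennreal (\<rho> x) * (\<Sum>y. ennreal (p x y) * ennreal (W y)) \<le> ennreal (W x)"
  shows "(\<integral>\<^sup>+\<omega>. ennreal ((\<Prod>j<k. \<rho> (X j \<omega>)) * W (X k \<omega>)) \<partial>M) \<le> ennreal (W n0)"
proof (induction k)
  case 0
  have "(\<integral>\<^sup>+\<omega>. ennreal (W (X 0 \<omega>)) \<partial>M) = (\<Sum>y. \<integral>\<^sup>+\<omega>. ennreal (W (X 0 \<omega>)) * indicator {\<omega>\<in>space M. X 0 \<omega> = y} \<omega> \<partial>M)"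
    by (rule decomp_nat[OF Xm]) measurable
  also have "\<dots> = (\<Sum>y. ennreal (W y) * emeasure M {\<omega>\<in>space M. X 0 \<omega> = y})"
  proof (rule suminf_cong)
    fix y
    have "(\<integral>\<^sup>+\<omega>. ennreal (W (X 0 \<omega>)) * indicator {\<omega>\<in>space M. X 0 \<omega> = y} \<omega> \<partial>M) =
       (\<integral>\<^sup>+\<omega>. ennreal (W y) * indicator {\<omega>\<in>space M. X 0 \<omega> = y} \<omega> \<partial>M)"
      by (intro nn_integral_cong) (auto simp: indicator_def)
    then show "(\<integral>\<^sup>+\<omega>. ennreal (W (X 0 \<omega>)) * indicator {\<omega>\<in>space M. X 0 \<omega> = y} \<omega> \<partial>M) =
       ennreal (W y) * emeasure M {\<omega>\<in>space M. X 0 \<omega> = y}"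
      by (simp add: nn_integral_cmult_indicator[OF Xsets])
  qed
  also have "\<dots> = (\<Sum>y\<in>{n0}. ennreal (W y) * emeasure M {\<omega>\<in>space M. X 0 \<omega> = y})"
    by (intro suminf_finite) (auto simp: emeasure_eq_measure X0_prob)
  also have "\<dots> = ennreal (W n0)" by (simp add: emeasure_eq_measure X0_prob)
  finally show ?case by simp
next
  case (Suc k)
  then show ?case using super_step[OF Wnn rnn super, of k] by (rule order_trans[rotated])
qed

end

context bcchain begin

lemma laplace:
  assumes t: "0 \<le> t"
  shows "(\<integral>\<^sup>+\<omega>. ennreal (exp (- t * E j \<omega>)) \<partial>M) = ennreal (1 / (1 + t))"
proof -
  have "(\<integral>\<^sup>+\<omega>. ennreal (exp (- t * E j \<omega>)) \<partial>M) =
      (\<integral>\<^sup>+x. ennreal (exponential_density 1 x) * ennreal (exp (- t * x)) \<partial>lborel)"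
    by (rule distributed_nn_integral[OF Edist, symmetric]) measurable
  also have "\<dots> = (\<integral>\<^sup>+x. ennreal (1 / (1 + t)) * ennreal (exponential_density (1 + t) x) \<partial>lborel)"
  proof (intro nn_integral_cong)
    fix x :: real
    show "ennreal (exponential_density 1 x) * ennreal (exp (- t * x)) =
        ennreal (1 / (1 + t)) * ennreal (exponential_density (1 + t) x)"
    proof (cases "x < 0")
      case True then show ?thesis by (simp add: exponential_density_def)
    next
      case False
      have e1: "1 / (1 + t) * ((1 + t) * exp (- x * (1 + t))) = exp (- x * (1 + t))" using t by simp
      have "exp (- x * 1) * exp (- t * x) = exp (- x * (1 + t))" by (simp add: exp_add[symmetric] algebra_simps)
      then have "exp (- x * 1) * exp (- t * x) = 1 / (1 + t) * ((1 + t) * exp (- x * (1 + t)))"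
        using e1 by simp
      then show ?thesis using False t
        by (simp add: exponential_density_def ennreal_mult'[symmetric] del: ennreal_mult')
    qed
  qed
  also have "\<dots> = ennreal (1 / (1 + t)) * (\<integral>\<^sup>+x. ennreal (exponential_density (1 + t) x) \<partial>lborel)"
    by (rule nn_integral_cmult) measurable
  also have "(\<integral>\<^sup>+x. ennreal (exponential_density (1 + t) x) \<partial>lborel) = 1"
  proof -
    interpret D: prob_space "density lborel (exponential_density (1 + t))"
      using t by (intro prob_space_exponential_density) simp
    have "emeasure (density lborel (exponential_density (1 + t))) UNIV = 1"
      using D.emeasure_space_1 by simp
    then show ?thesis by (subst (asm) emeasure_density) auto
  qed
  finally show ?thesis by simp
qed

lemma indep_piece:
  fixes g :: "nat \<Rightarrow> real \<Rightarrow> real"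
  assumes len: "length xs = Suc k" and gm: "\<And>j. g j \<in> borel_measurable borel" and gnn: "\<And>j x. 0 \<le> g j x"
  shows "(\<integral>\<^sup>+\<omega>. indicator {\<omega>\<in>space M. pre k \<omega> = xs} \<omega> * ennreal (\<Prod>j<k. g j (E j \<omega>)) \<partial>M) =
     emeasure M {\<omega>\<in>space M. pre k \<omega> = xs} * (\<Prod>j<k. \<integral>\<^sup>+\<omega>. ennreal (g j (E j \<omega>)) \<partial>M)"
proof -
  define Y1 :: "(nat \<Rightarrow> real) \<Rightarrow> real" where "Y1 = (\<lambda>x. \<Prod>i\<le>k. indicator {real (xs ! i)} (x i))"
  define Y2 :: "(nat \<Rightarrow> real) \<Rightarrow> real" where "Y2 = (\<lambda>e. \<Prod>j<k. g j (e j))"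
  have Y1m: "Y1 \<in> borel_measurable (PiM UNIV (\<lambda>_. count_space (UNIV::real set)))"
    unfolding Y1_def
  proof (intro borel_measurable_prod)
    fix i
    show "(\<lambda>x. indicator {real (xs ! i)} (x i)) \<in> borel_measurable (PiM UNIV (\<lambda>_. count_space (UNIV::real set)))"
      by (rule measurable_compose[OF measurable_component_singleton]) auto
  qed
  have Y2m: "Y2 \<in> borel_measurable (PiM UNIV (\<lambda>_. borel))"
    unfolding Y2_def using gm by measurable
  have ind: "indep_var borel (Y1 \<circ> (\<lambda>\<omega> k. real (X k \<omega>))) borel (Y2 \<circ> (\<lambda>\<omega> k. E k \<omega>))"
    by (rule indep_var_compose[OF XEindep Y1m Y2m])
  have **: "(\<lambda> _. borel) = case_bool borel borel"
    by (rule ext, metis (full_types) bool.simps(3) bool.simps(4))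
  have ind2: "indep_vars (\<lambda>_. borel) (case_bool (Y1 \<circ> (\<lambda>\<omega> k. real (X k \<omega>))) (Y2 \<circ> (\<lambda>\<omega> k. E k \<omega>))) UNIV"
    using ind unfolding indep_var_def by (subst **)
  define C where "C = case_bool (Y1 \<circ> (\<lambda>\<omega> k. real (X k \<omega>))) (Y2 \<circ> (\<lambda>\<omega> k. E k \<omega>))"
  have ind3: "indep_vars (\<lambda>_. borel) (\<lambda>b \<omega>. ennreal (C b \<omega>)) UNIV"
    unfolding C_def by (rule indep_vars_compose2[OF ind2]) measurable
  have "(\<integral>\<^sup>+\<omega>. (\<Prod>b\<in>UNIV. ennreal (C b \<omega>)) \<partial>M) = (\<Prod>b\<in>UNIV. \<integral>\<^sup>+\<omega>. ennreal (C b \<omega>) \<partial>M)"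
    by (rule indep_vars_nn_integral[OF _ ind3]) auto
  moreover have "Y1 x \<ge> 0" "Y2 e \<ge> 0" for x e
    using gnn by (auto simp: Y1_def Y2_def prod_nonneg)
  ultimately have eq: "(\<integral>\<^sup>+\<omega>. ennreal (Y1 (\<lambda>k. real (X k \<omega>)) * Y2 (\<lambda>k. E k \<omega>)) \<partial>M)
     = (\<integral>\<^sup>+\<omega>. ennreal (Y1 (\<lambda>k. real (X k \<omega>))) \<partial>M) * (\<integral>\<^sup>+\<omega>. ennreal (Y2 (\<lambda>k. E k \<omega>)) \<partial>M)"
    by (simp add: UNIV_bool C_def ennreal_mult' mult.commute)
  have Y1eq: "Y1 (\<lambda>k. real (X k \<omega>)) = indicator {\<omega>\<in>space M. pre k \<omega> = xs} \<omega>" if "\<omega> \<in> space M" for \<omega>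
  proof (cases "\<forall>i\<le>k. X i \<omega> = xs ! i")
    case True
    then have "\<omega> \<in> {\<omega>\<in>space M. pre k \<omega> = xs}" using pre_set[OF len] that by auto
    then show ?thesis using True by (simp add: Y1_def)
  next
    case False
    then obtain i where "i \<le> k" "X i \<omega> \<noteq> xs ! i" by auto
    then have "Y1 (\<lambda>k. real (X k \<omega>)) = 0" unfolding Y1_def
      by (intro prod_zero) (auto intro!: bexI[of _ i])
    moreover have "\<omega> \<notin> {\<omega>\<in>space M. pre k \<omega> = xs}" using pre_set[OF len] False by auto
    ultimately show ?thesis by simp
  qed
  have "(\<integral>\<^sup>+\<omega>. indicator {\<omega>\<in>space M. pre k \<omega> = xs} \<omega> * ennreal (\<Prod>j<k. g j (E j \<omega>)) \<partial>M)
     = (\<integral>\<^sup>+\<omega>. ennreal (Y1 (\<lambda>k. real (X k \<omega>)) * Y2 (\<lambda>k. E k \<omega>)) \<partial>M)"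
    by (intro nn_integral_cong) (auto simp: Y1eq Y2_def indicator_def)
  also have "\<dots> = (\<integral>\<^sup>+\<omega>. ennreal (Y1 (\<lambda>k. real (X k \<omega>))) \<partial>M) * (\<integral>\<^sup>+\<omega>. ennreal (Y2 (\<lambda>k. E k \<omega>)) \<partial>M)"
    by (rule eq)
  also have "(\<integral>\<^sup>+\<omega>. ennreal (Y1 (\<lambda>k. real (X k \<omega>))) \<partial>M) = (\<integral>\<^sup>+\<omega>. indicator {\<omega>\<in>space M. pre k \<omega> = xs} \<omega> \<partial>M)"
    by (intro nn_integral_cong) (auto simp: Y1eq indicator_def)
  also have "\<dots> = emeasure M {\<omega>\<in>space M. pre k \<omega> = xs}"
    by (rule nn_integral_indicator) measurable
  also have "(\<integral>\<^sup>+\<omega>. ennreal (Y2 (\<lambda>k. E k \<omega>)) \<partial>M) = (\<integral>\<^sup>+\<omega>. (\<Prod>j\<in>{..<k}. ennreal (g j (E j \<omega>))) \<partial>M)"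
    using gnn by (simp add: Y2_def prod_ennreal)
  also have "\<dots> = (\<Prod>j<k. \<integral>\<^sup>+\<omega>. ennreal (g j (E j \<omega>)) \<partial>M)"
  proof (rule indep_vars_nn_integral)
    show "indep_vars (\<lambda>_. borel) (\<lambda>j \<omega>. ennreal (g j (E j \<omega>))) {..<k}"
      by (rule indep_vars_compose2[where Y="\<lambda>j x. ennreal (g j x)", OF indep_vars_subset[OF Eindep]]) (use gm in measurable)
  qed auto
  finally show ?thesis .
qed

end

context bcchain begin

lemma F_pre_meas: "(\<lambda>\<omega>. F (pre k \<omega>) :: real) \<in> borel_measurable M"
  by (rule measurable_compose[OF pre_meas]) simp

lemma X_fun_meas: "(\<lambda>\<omega>. f (X k \<omega>) :: real) \<in> borel_measurable M"
  by (rule measurable_compose[OF Xm]) simp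

lemmas [measurable] = F_pre_meas X_fun_meas

lemma E_factor:
  fixes F :: "nat list \<Rightarrow> real" and s :: real and q :: "nat \<Rightarrow> real"
  assumes Fnn: "\<And>xs. 0 \<le> F xs" and s: "0 \<le> s" and q: "\<And>x. 0 \<le> q x"
  shows "(\<integral>\<^sup>+\<omega>. ennreal (F (pre k \<omega>) * (\<Prod>j<k. exp (- (s / q (X j \<omega>)) * E j \<omega>))) \<partial>M)
       = (\<integral>\<^sup>+\<omega>. ennreal (F (pre k \<omega>) * (\<Prod>j<k. 1 / (1 + s / q (X j \<omega>)))) \<partial>M)"
proof -
  let ?f1 = "\<lambda>\<omega>. ennreal (F (pre k \<omega>) * (\<Prod>j<k. exp (- (s / q (X j \<omega>)) * E j \<omega>)))"
  let ?f0 = "\<lambda>\<omega>. ennreal (F (pre k \<omega>) * (\<Prod>j<k. 1 / (1 + s / q (X j \<omega>))))"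
  have "(\<integral>\<^sup>+\<omega>. ?f1 \<omega> \<partial>M) = (\<Sum>i. \<integral>\<^sup>+\<omega>. ?f1 \<omega> * indicator {\<omega>\<in>space M. to_nat (pre k \<omega>) = i} \<omega> \<partial>M)"
    by (rule decomp_pre) measurable
  also have "\<dots> = (\<Sum>i. \<integral>\<^sup>+\<omega>. ?f0 \<omega> * indicator {\<omega>\<in>space M. to_nat (pre k \<omega>) = i} \<omega> \<partial>M)"
  proof (rule suminf_cong)
    fix i
    show "(\<integral>\<^sup>+\<omega>. ?f1 \<omega> * indicator {\<omega>\<in>space M. to_nat (pre k \<omega>) = i} \<omega> \<partial>M)
        = (\<integral>\<^sup>+\<omega>. ?f0 \<omega> * indicator {\<omega>\<in>space M. to_nat (pre k \<omega>) = i} \<omega> \<partial>M)"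
    proof (cases "i \<in> range (to_nat :: nat list \<Rightarrow> nat)")
      case False
      then show ?thesis by (simp add: U_set)
    next
      case True
      then obtain xs :: "nat list" where i: "i = to_nat xs" by auto
      let ?A = "{\<omega>\<in>space M. pre k \<omega> = xs}"
      have setA: "{\<omega>\<in>space M. to_nat (pre k \<omega>) = i} = ?A" using i by auto
      show ?thesis
      proof (cases "length xs = Suc k")
        case False
        then show ?thesis unfolding setA using pre_set_empty by simp
      next
        case len: True
        define g where "g = (\<lambda>j e. exp (- (s / q (xs ! j)) * e))"
        have gm: "g j \<in> borel_measurable borel" for j unfolding g_def by measurable
        have gnn: "0 \<le> g j e" for j e unfolding g_def by simp
        have "(\<integral>\<^sup>+\<omega>. ?f1 \<omega> * indicator ?A \<omega> \<partial>M) =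
            (\<integral>\<^sup>+\<omega>. ennreal (F xs) * (indicator ?A \<omega> * ennreal (\<Prod>j<k. g j (E j \<omega>))) \<partial>M)"
        proof (intro nn_integral_cong)
          fix \<omega> assume "\<omega> \<in> space M"
          show "?f1 \<omega> * indicator ?A \<omega> = ennreal (F xs) * (indicator ?A \<omega> * ennreal (\<Prod>j<k. g j (E j \<omega>)))"
          proof (cases "\<omega> \<in> ?A")
            case True
            then have "(\<Prod>j<k. exp (- (s / q (X j \<omega>)) * E j \<omega>)) = (\<Prod>j<k. g j (E j \<omega>))"
              unfolding g_def using on_pre[OF True] by (intro prod.cong) auto
            then show ?thesis using True Fnn by (simp add: ennreal_mult' prod_nonneg)
          qed simp
        qed
        also have "\<dots> = ennreal (F xs) * (emeasure M ?A * (\<Prod>j<k. \<integral>\<^sup>+\<omega>. ennreal (g j (E j \<omega>)) \<partial>M))"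
        proof -
          have "(\<lambda>\<omega>. indicator ?A \<omega> * ennreal (\<Prod>j<k. g j (E j \<omega>))) \<in> borel_measurable M"
            using gm by measurable
          then show ?thesis using indep_piece[where g=g, OF len gm gnn] by (simp add: nn_integral_cmult)
        qed
        also have "(\<Prod>j<k. \<integral>\<^sup>+\<omega>. ennreal (g j (E j \<omega>)) \<partial>M) = (\<Prod>j<k. ennreal (1 / (1 + s / q (xs ! j))))"
          unfolding g_def using s q by (intro prod.cong refl laplace) auto
        also have "\<dots> = ennreal (\<Prod>j<k. 1 / (1 + s / q (xs ! j)))"
          using s q by (intro prod_ennreal) auto
        also have "ennreal (F xs) * (emeasure M ?A * ennreal (\<Prod>j<k. 1 / (1 + s / q (xs ! j))))
            = (\<integral>\<^sup>+\<omega>. ennreal (F xs * (\<Prod>j<k. 1 / (1 + s / q (xs ! j))))  * indicator ?A \<omega> \<partial>M)"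
          using s q Fnn by (subst nn_integral_cmult_indicator) (auto simp: ennreal_mult' prod_nonneg mult_ac)
        also have "\<dots> = (\<integral>\<^sup>+\<omega>. ?f0 \<omega> * indicator ?A \<omega> \<partial>M)"
        proof (intro nn_integral_cong)
          fix \<omega> assume "\<omega> \<in> space M"
          show "ennreal (F xs * (\<Prod>j<k. 1 / (1 + s / q (xs ! j)))) * indicator ?A \<omega> = ?f0 \<omega> * indicator ?A \<omega>"
          proof (cases "\<omega> \<in> ?A")
            case True
            then have "(\<Prod>j<k. 1 / (1 + s / q (X j \<omega>))) = (\<Prod>j<k. 1 / (1 + s / q (xs ! j)))"
              using on_pre[OF True] by (intro prod.cong) auto
            then show ?thesis using True by simp
          qed simp
        qed
        finally show ?thesis unfolding setA .
      qed
    qed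
  qed
  also have "\<dots> = (\<integral>\<^sup>+\<omega>. ?f0 \<omega> \<partial>M)"
    by (rule decomp_pre[symmetric]) measurable
  finally show ?thesis .
qed

end

lemma prod_one_plus_ge:
  fixes a :: "nat \<Rightarrow> real"
  assumes "\<And>j. 0 \<le> a j"
  shows "1 + (\<Sum>j<k. a j) \<le> (\<Prod>j<k. 1 + a j)"
proof (induction k)
  case (Suc k)
  have "1 + (\<Sum>j<Suc k. a j) \<le> (1 + (\<Sum>j<k. a j)) * (1 + a k)"
    using assms sum_nonneg[of "{..<k}" a] by (simp add: algebra_simps)
  also have "\<dots> \<le> (\<Prod>j<k. 1 + a j) * (1 + a k)"
    using Suc assms[of k] by (intro mult_right_mono) auto
  finally show ?case by simp
qed simp

lemma path_blowup:
  fixes q W :: "nat \<Rightarrow> real" and x :: "nat \<Rightarrow> nat" and e :: "nat \<Rightarrow> real" and c :: real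
  assumes qpos: "\<And>k. 0 < q (x k)" and summ: "summable (\<lambda>k. e k / q (x k))"
    and Wlim: "filterlim W at_top sequentially" and Wnn: "\<And>n. 0 \<le> W n" and c: "0 < c"
  shows "filterlim (\<lambda>k. (\<Prod>j<k. exp (- (c / q (x j)) * e j)) * W (x k)
     + (\<Prod>j<k. 1 + 1 / q (x j)) * (\<Prod>j<k. exp (- (1 / q (x j)) * e j))) at_top sequentially"
proof -
  define S where "S k = (\<Sum>j<k. e j / q (x j))" for k
  have "convergent S" using summ unfolding S_def summable_iff_convergent .
  then have "Bseq S" by (rule convergent_imp_Bseq)
  then obtain B where B: "\<And>k. norm (S k) \<le> B" by (auto simp: Bseq_def)
  have prodexp: "(\<Prod>j<k. exp (- (a / q (x j)) * e j)) = exp (- a * S k)" for a k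
    unfolding S_def by (simp add: exp_sum[symmetric] sum_distrib_left sum_negf)
  have prodexp_ge: "exp (- a * B) \<le> (\<Prod>j<k. exp (- (a / q (x j)) * e j))" if "0 \<le> a" for a k
  proof -
    have "- a * B \<le> - a * S k" using B[of k] that by (intro mult_left_mono_neg) auto
    then show ?thesis unfolding prodexp by simp
  qed
  have prod1_nn: "0 \<le> (\<Prod>j<k. 1 + 1 / q (x j))" for k
    using qpos by (intro prod_nonneg) (smt (verit) divide_nonneg_pos zero_less_one)
  have t1_nn: "0 \<le> (\<Prod>j<k. exp (- (c / q (x j)) * e j)) * W (x k)" for k
    using Wnn by (simp add: prod_nonneg)
  have t2_nn: "0 \<le> (\<Prod>j<k. 1 + 1 / q (x j)) * (\<Prod>j<k. exp (- (1 / q (x j)) * e j))" for k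
    using prod1_nn by (simp add: prod_nonneg)
  show ?thesis
  proof (cases "summable (\<lambda>k. 1 / q (x k))")
    case True
    then have lim0: "(\<lambda>k. 1 / q (x k)) \<longlonglongrightarrow> 0" by (rule summable_LIMSEQ_zero)
    have xlim: "filterlim x at_top sequentially"
      unfolding filterlim_at_top
    proof
      fix N :: nat
      define Q where "Q = Max (insert 0 (q ` {..<N}))"
      have Qge: "n < N \<Longrightarrow> q n \<le> Q" for n unfolding Q_def by (intro Max_ge) auto
      have Q0: "0 \<le> Q" unfolding Q_def by (intro Max_ge) auto
      have "eventually (\<lambda>k. 1 / q (x k) < 1 / (Q + 1)) sequentially"
        using lim0 Q0 by (intro order_tendstoD) auto
      then show "eventually (\<lambda>k. N \<le> x k) sequentially"
      proof (rule eventually_mono)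
        fix k assume "1 / q (x k) < 1 / (Q + 1)"
        then have "Q + 1 < q (x k)" using qpos[of k] Q0 by (simp add: frac_less_eq field_simps)
        then show "N \<le> x k" using Qge[of "x k"] by (cases "x k < N") auto
      qed
    qed
    have Wx: "filterlim (\<lambda>k. W (x k)) at_top sequentially"
      by (rule filterlim_compose[OF Wlim xlim])
    have "filterlim (\<lambda>k. exp (- c * B) * W (x k)) at_top sequentially"
      by (rule filterlim_tendsto_pos_mult_at_top[OF tendsto_const _ Wx]) simp
    then show ?thesis
    proof (rule filterlim_at_top_mono, intro always_eventually allI)
      fix k
      have "exp (- c * B) * W (x k) \<le> (\<Prod>j<k. exp (- (c / q (x j)) * e j)) * W (x k)"
        using prodexp_ge[of c k] c Wnn by (intro mult_right_mono) auto
      then show "exp (- c * B) * W (x k) \<le> (\<Prod>j<k. exp (- (c / q (x j)) * e j)) * W (x k)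
         + (\<Prod>j<k. 1 + 1 / q (x j)) * (\<Prod>j<k. exp (- (1 / q (x j)) * e j))"
        using t2_nn[of k] by linarith
    qed
  next
    case False
    define T where "T k = (\<Sum>j<k. 1 / q (x j))" for k
    have Tlim: "filterlim T at_top sequentially"
      unfolding filterlim_at_top
    proof
      fix z :: real
      obtain n where n: "z < T n"
      proof (rule ccontr)
        assume "\<not> thesis"
        then have "\<And>n. T n \<le> z" using that by (meson not_le)
        then have "summable (\<lambda>k. 1 / q (x k))"
          using qpos unfolding T_def by (intro summableI_nonneg_bounded[where x=z]) (auto intro: less_imp_le)
        then show False using False by simp
      qed
      show "eventually (\<lambda>k. z \<le> T k) sequentially"
        unfolding eventually_sequentially
      proof (intro exI allI impI)
        fix k assume "n \<le> k"
        then have "T n \<le> T k" unfolding T_def using qpos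
          by (intro sum_mono2) (auto intro: less_imp_le)
        then show "z \<le> T k" using n by simp
      qed
    qed
    have "filterlim (\<lambda>k. exp (- 1 * B) * T k) at_top sequentially"
      by (rule filterlim_tendsto_pos_mult_at_top[OF tendsto_const _ Tlim]) simp
    then show ?thesis
    proof (rule filterlim_at_top_mono, intro always_eventually allI)
      fix k
      have "T k \<le> (\<Prod>j<k. 1 + 1 / q (x j))"
        using prod_one_plus_ge[of "\<lambda>j. 1 / q (x j)" k] qpos unfolding T_def
        by (smt (verit) divide_nonneg_pos zero_less_one)
      moreover have "0 \<le> T k" unfolding T_def using qpos by (intro sum_nonneg) (auto intro: less_imp_le)
      ultimately have "exp (- 1 * B) * T k \<le> (\<Prod>j<k. exp (- (1 / q (x j)) * e j)) * (\<Prod>j<k. 1 + 1 / q (x j))"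
        using prodexp_ge[of 1 k] by (intro mult_mono) (auto intro: prod_nonneg)
      then show "exp (- 1 * B) * T k \<le> (\<Prod>j<k. exp (- (c / q (x j)) * e j)) * W (x k)
         + (\<Prod>j<k. 1 + 1 / q (x j)) * (\<Prod>j<k. exp (- (1 / q (x j)) * e j))"
        using t1_nn[of k] by (simp add: mult.commute)
    qed
  qed
qed


context bcchain begin

lemma no_explosion:
  fixes q W :: "nat \<Rightarrow> real" and c :: real
  assumes qnn: "\<And>x. 0 \<le> q x" and c: "0 < c" and Wnn: "\<And>x. 0 \<le> W x"
    and Wlim: "filterlim W at_top sequentially"
    and super: "\<And>x. ennreal (1 / (1 + c / q x)) * (\<Sum>y. ennreal (p x y) * ennreal (W y)) \<le> ennreal (W x)"
  shows "measure M {\<omega>\<in>space M. (\<forall>k. 0 < q (X k \<omega>)) \<and> summable (\<lambda>k. E k \<omega> / q (X k \<omega>))} = 0"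
proof -
  define A where "A k \<omega> = (\<Prod>j<k. exp (- (c / q (X j \<omega>)) * E j \<omega>)) * W (X k \<omega>)" for k \<omega>
  define B where "B k \<omega> = (\<Prod>j<k. 1 + 1 / q (X j \<omega>)) * (\<Prod>j<k. exp (- (1 / q (X j \<omega>)) * E j \<omega>))" for k \<omega>
  define Z where "Z k \<omega> = ennreal (A k \<omega> + B k \<omega>)" for k \<omega>
  have Anm: "0 \<le> A k \<omega>" for k \<omega> unfolding A_def using Wnn by (simp add: prod_nonneg)
  have Bnn: "0 \<le> B k \<omega>" for k \<omega> unfolding B_def using qnn
    by (intro mult_nonneg_nonneg prod_nonneg) (auto intro: add_nonneg_nonneg)
  have Am: "A k \<in> borel_measurable M" for k unfolding A_def by measurable
  have Bm: "B k \<in> borel_measurable M" for k unfolding B_def by measurable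
  have Zm: "Z k \<in> borel_measurable M" for k unfolding Z_def using Am Bm by measurable
  have EA: "(\<integral>\<^sup>+\<omega>. ennreal (A k \<omega>) \<partial>M) \<le> ennreal (W n0)" for k
  proof -
    have "(\<integral>\<^sup>+\<omega>. ennreal (A k \<omega>) \<partial>M) =
        (\<integral>\<^sup>+\<omega>. ennreal ((\<lambda>xs. W (xs ! k)) (pre k \<omega>) * (\<Prod>j<k. exp (- (c / q (X j \<omega>)) * E j \<omega>))) \<partial>M)"
      unfolding A_def by (intro nn_integral_cong) (simp add: pre_nth mult.commute)
    also have "\<dots> = (\<integral>\<^sup>+\<omega>. ennreal ((\<lambda>xs. W (xs ! k)) (pre k \<omega>) * (\<Prod>j<k. 1 / (1 + c / q (X j \<omega>)))) \<partial>M)"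
      using c qnn Wnn by (intro E_factor) (auto intro: less_imp_le)
    also have "\<dots> = (\<integral>\<^sup>+\<omega>. ennreal ((\<Prod>j<k. 1 / (1 + c / q (X j \<omega>))) * W (X k \<omega>)) \<partial>M)"
      by (intro nn_integral_cong) (simp add: pre_nth mult.commute)
    also have "\<dots> \<le> ennreal (W n0)"
      using c qnn by (intro super_all[OF Wnn _ super]) (auto intro: add_nonneg_nonneg)
    finally show ?thesis .
  qed
  have EB: "(\<integral>\<^sup>+\<omega>. ennreal (B k \<omega>) \<partial>M) = 1" for k
  proof -
    have "(\<integral>\<^sup>+\<omega>. ennreal (B k \<omega>) \<partial>M) =
        (\<integral>\<^sup>+\<omega>. ennreal ((\<lambda>xs. \<Prod>j<k. 1 + 1 / q (xs ! j)) (pre k \<omega>) * (\<Prod>j<k. exp (- (1 / q (X j \<omega>)) * E j \<omega>))) \<partial>M)"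
      unfolding B_def by (intro nn_integral_cong) (simp add: pre_nth)
    also have "\<dots> = (\<integral>\<^sup>+\<omega>. ennreal ((\<lambda>xs. \<Prod>j<k. 1 + 1 / q (xs ! j)) (pre k \<omega>) * (\<Prod>j<k. 1 / (1 + 1 / q (X j \<omega>)))) \<partial>M)"
      using qnn by (intro E_factor) (auto intro!: prod_nonneg add_nonneg_nonneg)
    also have "\<dots> = (\<integral>\<^sup>+\<omega>. 1 \<partial>M)"
    proof (intro nn_integral_cong)
      fix \<omega>
      have p1: "(\<Prod>j<k. 1 + 1 / q (pre k \<omega> ! j)) = (\<Prod>j<k. 1 + 1 / q (X j \<omega>))"
        by (intro prod.cong) (auto simp: pre_nth)
      have "(\<Prod>j<k. 1 + 1 / q (pre k \<omega> ! j)) * (\<Prod>j<k. 1 / (1 + 1 / q (X j \<omega>))) =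
          (\<Prod>j<k. (1 + 1 / q (X j \<omega>)) * (1 / (1 + 1 / q (X j \<omega>))))"
        unfolding p1 by (rule prod.distrib[symmetric])
      also have "\<dots> = 1"
      proof (intro prod.neutral ballI)
        fix j
        have "0 \<le> 1 / q (X j \<omega>)" using qnn by simp
        then have "1 + 1 / q (X j \<omega>) \<noteq> 0" by linarith
        then show "(1 + 1 / q (X j \<omega>)) * (1 / (1 + 1 / q (X j \<omega>))) = 1" by simp
      qed
      finally show "ennreal ((\<lambda>xs. \<Prod>j<k. 1 + 1 / q (xs ! j)) (pre k \<omega>) * (\<Prod>j<k. 1 / (1 + 1 / q (X j \<omega>)))) = 1"
        by simp
    qed
    also have "\<dots> = 1" by (simp add: emeasure_space_1)
    finally show ?thesis .
  qed
  have EZ: "integral\<^sup>N M (Z k) \<le> ennreal (W n0) + 1" for k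
  proof -
    have "integral\<^sup>N M (Z k) = (\<integral>\<^sup>+\<omega>. ennreal (A k \<omega>) \<partial>M) + (\<integral>\<^sup>+\<omega>. ennreal (B k \<omega>) \<partial>M)"
      unfolding Z_def using Anm Bnn Am Bm by (subst nn_integral_add[symmetric]) (auto simp: ennreal_plus)
    then show ?thesis using EA[of k] EB[of k] by (simp add: add_right_mono)
  qed
  have "(\<integral>\<^sup>+\<omega>. liminf (\<lambda>n. Z n \<omega>) \<partial>M) \<le> liminf (\<lambda>n. integral\<^sup>N M (Z n))"
    by (rule nn_integral_liminf[OF Zm])
  also have "\<dots> \<le> limsup (\<lambda>n. integral\<^sup>N M (Z n))"
    by (rule Liminf_le_Limsup) simp
  also have "\<dots> \<le> ennreal (W n0) + 1"
    by (rule Limsup_bounded) (use EZ in auto)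
  also have "\<dots> < \<infinity>" by simp
  finally have fin: "(\<integral>\<^sup>+\<omega>. liminf (\<lambda>n. Z n \<omega>) \<partial>M) \<noteq> \<infinity>" by simp
  have "AE \<omega> in M. liminf (\<lambda>n. Z n \<omega>) \<noteq> \<infinity>"
    by (rule nn_integral_PInf_AE[OF _ fin]) (use Zm in measurable)
  then obtain N where N: "{\<omega>\<in>space M. \<not> liminf (\<lambda>n. Z n \<omega>) \<noteq> \<infinity>} \<subseteq> N" "emeasure M N = 0" "N \<in> sets M"
    by (rule AE_E)
  let ?Ex = "{\<omega>\<in>space M. (\<forall>k. 0 < q (X k \<omega>)) \<and> summable (\<lambda>k. E k \<omega> / q (X k \<omega>))}"
  have sub: "?Ex \<subseteq> N"
  proof
    fix \<omega> assume w: "\<omega> \<in> ?Ex"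
    then have wq: "\<And>k. 0 < q (X k \<omega>)" and ws: "summable (\<lambda>k. E k \<omega> / q (X k \<omega>))" by blast+
    have "filterlim (\<lambda>k. A k \<omega> + B k \<omega>) at_top sequentially"
      unfolding A_def B_def by (rule path_blowup[where q=q and x="\<lambda>k. X k \<omega>" and e="\<lambda>k. E k \<omega>", OF wq ws Wlim Wnn c])
    then have "((\<lambda>k. Z k \<omega>) \<longlongrightarrow> top) sequentially"
      unfolding Z_def by (simp only: ennreal_tendsto_top_eq_at_top)
    then have lim: "liminf (\<lambda>n. Z n \<omega>) = \<infinity>"
      using lim_imp_Liminf[of sequentially] by simp
    have "\<omega> \<in> {\<omega>\<in>space M. \<not> liminf (\<lambda>n. Z n \<omega>) \<noteq> \<infinity>}" using w lim by simp
    then show "\<omega> \<in> N" using N(1) by blast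
  qed
  show ?thesis
  proof (cases "?Ex \<in> sets M")
    case True
    have le: "emeasure M ?Ex \<le> emeasure M N" using sub N(3) by (rule emeasure_mono)
    have le0: "emeasure M ?Ex \<le> 0" using le unfolding N(2) .
    have e0: "emeasure M ?Ex = 0" using le0 by (rule antisym) simp
    have "measure M ?Ex = enn2real (emeasure M ?Ex)" by (rule measure_def)
    also have "\<dots> = 0" unfolding e0 by (rule enn2real_0)
    finally show ?thesis .
  next
    case False
    then show ?thesis by (rule measure_notin_sets)
  qed
qed

end

fun GG :: "nat \<Rightarrow> real \<Rightarrow> real" where
  "GG 0 y = y"
| "GG (Suc l) y = ln (1 + GG l y)"

definition DD :: "nat \<Rightarrow> real \<Rightarrow> real" where
  "DD m y = (\<Prod>l<m. 1 / (1 + GG l y))"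

lemma GG_nonneg: "0 \<le> y \<Longrightarrow> 0 \<le> GG l y"
  by (induction l) auto

lemma GG_le: "0 \<le> y \<Longrightarrow> GG l y \<le> y"
proof (induction l)
  case (Suc l)
  have "ln (1 + GG l y) \<le> GG l y"
    using GG_nonneg[OF Suc.prems, of l] by (simp add: ln_add_one_self_le_self)
  then show ?case using Suc by simp
qed simp

lemma ln_diff_le_div: "0 < (a::real) \<Longrightarrow> 0 < b \<Longrightarrow> ln a - ln b \<le> (a - b) / b"
proof -
  assume a: "0 < a" and b: "0 < b"
  have "0 < a / b" using a b by simp
  then have "ln (a / b) \<le> a / b - 1" by (rule ln_le_minus_one)
  then show ?thesis using a b by (simp add: ln_div diff_divide_distrib)
qed

lemma DD_nonneg: "0 \<le> y \<Longrightarrow> 0 \<le> DD m y"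
  unfolding DD_def using GG_nonneg by (intro prod_nonneg) (auto intro: add_nonneg_nonneg)

lemma DD_le1: "0 \<le> y \<Longrightarrow> DD m y \<le> 1"
proof -
  assume y: "0 \<le> y"
  show ?thesis unfolding DD_def
  proof (intro prod_le_1 conjI)
    fix l
    have g: "0 \<le> GG l y" using GG_nonneg[OF y] .
    then show "0 \<le> 1 / (1 + GG l y)" by simp
    show "1 / (1 + GG l y) \<le> 1" using g by simp
  qed
qed

lemma DD_Suc: "DD (Suc m) y = DD m y / (1 + GG m y)"
  unfolding DD_def by simp

lemma GG_tangent: "0 \<le> x \<Longrightarrow> 0 \<le> y \<Longrightarrow> GG m y - GG m x \<le> DD m x * (y - x)"
proof (induction m)
  case 0 then show ?case by (simp add: DD_def)
next
  case (Suc m)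
  have px: "0 < 1 + GG m x" using GG_nonneg[OF Suc.prems(1), of m] by simp
  have py: "0 < 1 + GG m y" using GG_nonneg[OF Suc.prems(2), of m] by simp
  have "GG (Suc m) y - GG (Suc m) x = ln (1 + GG m y) - ln (1 + GG m x)" by simp
  also have "\<dots> \<le> ((1 + GG m y) - (1 + GG m x)) / (1 + GG m x)"
    by (rule ln_diff_le_div[OF py px])
  also have "\<dots> = (GG m y - GG m x) / (1 + GG m x)" by simp
  also have "\<dots> \<le> (DD m x * (y - x)) / (1 + GG m x)"
    using Suc px by (intro divide_right_mono) auto
  also have "\<dots> = DD (Suc m) x * (y - x)" by (simp add: DD_Suc)
  finally show ?case .
qed

lemma DD_le_inv: "1 \<le> m \<Longrightarrow> 0 \<le> y \<Longrightarrow> DD m y \<le> 1 / (1 + y)"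
proof (induction m rule: dec_induct)
  case base then show ?case by (simp add: DD_def)
next
  case (step m)
  have "DD (Suc m) y = DD m y / (1 + GG m y)" by (rule DD_Suc)
  also have "\<dots> \<le> DD m y"
    using DD_nonneg[OF step.prems] GG_nonneg[OF step.prems, of m]
    by (simp add: divide_le_eq_1 field_simps mult_le_cancel_left1 )
  finally show ?case using step by simp
qed

lemma GG_at_top: "filterlim (GG m) at_top at_top"
proof (induction m)
  case 0 then show ?case by (simp add: filterlim_ident)
next
  case (Suc m)
  have "filterlim (\<lambda>y. 1 + GG m y) at_top at_top"
    by (rule filterlim_tendsto_add_at_top[OF tendsto_const Suc])
  then have "filterlim (\<lambda>y. ln (1 + GG m y)) at_top at_top"
    by (rule filterlim_compose[OF ln_at_top])
  then show ?case by simp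
qed


lemma iter_ln_le_GG:
  fixes x :: real
  assumes "\<forall>j\<in>{1..Suc l}. 0 < (ln ^^ j) x"
  shows "(ln ^^ (Suc l)) x \<le> GG l (ln x)"
  using assms
proof (induction l)
  case 0 then show ?case by simp
next
  case (Suc l)
  have pos: "0 < (ln ^^ (Suc l)) x" using bspec[OF Suc.prems, of "Suc l"] by (simp del: funpow.simps)
  have IH: "(ln ^^ (Suc l)) x \<le> GG l (ln x)" using Suc by auto
  have "(ln ^^ (Suc (Suc l))) x = ln ((ln ^^ (Suc l)) x)" by simp
  also have "\<dots> \<le> ln (GG l (ln x))" using pos IH by simp
  also have "\<dots> \<le> ln (1 + GG l (ln x))" using pos IH by simp
  finally show ?case by simp
qed

lemma DD_prod_le:
  fixes x :: real
  assumes "\<forall>j\<in>{1..m}. 0 < (ln ^^ j) x"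
  shows "DD m (ln x) * (\<Prod>l<m. (ln ^^ (Suc l)) x) \<le> 1"
proof -
  have "DD m (ln x) * (\<Prod>l<m. (ln ^^ (Suc l)) x) = (\<Prod>l<m. (ln ^^ (Suc l)) x / (1 + GG l (ln x)))"
    unfolding DD_def by (simp add: prod.distrib[symmetric])
  also have "\<dots> \<le> 1"
  proof (intro prod_le_1 conjI)
    fix l assume l: "l \<in> {..<m}"
    have pos: "0 < (ln ^^ (Suc l)) x" using bspec[OF assms, of "Suc l"] l by (simp del: funpow.simps)
    have le: "(ln ^^ (Suc l)) x \<le> GG l (ln x)" using assms l by (intro iter_ln_le_GG) auto
    show "0 \<le> (ln ^^ (Suc l)) x / (1 + GG l (ln x))" using pos le by simp
    show "(ln ^^ (Suc l)) x / (1 + GG l (ln x)) \<le> 1" using pos le by simp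
  qed
  finally show ?thesis .
qed

lemma iter_ln_at_top: "filterlim (ln ^^ j) at_top (at_top :: real filter)"
proof (induction j)
  case 0 then show ?case by (simp add: filterlim_ident)
next
  case (Suc j)
  have "filterlim (\<lambda>x. ln ((ln ^^ j) x)) at_top (at_top :: real filter)"
    by (rule filterlim_compose[OF ln_at_top Suc])
  then show ?case by (simp add: o_def)
qed

lemma iter_ln_pos_ev: "eventually (\<lambda>n::nat. \<forall>j\<le>m. 0 < (ln ^^ j) (real n)) sequentially"
proof -
  have "eventually (\<lambda>n::nat. 0 < (ln ^^ j) (real n)) sequentially" for j
  proof -
    have "filterlim (\<lambda>n::nat. (ln ^^ j) (real n)) at_top sequentially"
      by (rule filterlim_compose[OF iter_ln_at_top filterlim_real_sequentially])
    then show ?thesis by (simp add: filterlim_at_top_dense)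
  qed
  then have "eventually (\<lambda>n::nat. \<forall>j\<in>{..m}. 0 < (ln ^^ j) (real n)) sequentially"
    by (intro eventually_ball_finite) auto
  then show ?thesis by (rule eventually_mono) auto
qed


lemma ln1p_le_2sqrt:
  fixes t :: real assumes t: "0 \<le> t"
  shows "ln (1 + t) \<le> 2 * sqrt t"
proof -
  have "1 + t \<le> (1 + sqrt t)^2" using t by (simp add: power2_eq_square algebra_simps)
  moreover have "0 < 1 + t" using t by simp
  ultimately have "ln (1 + t) \<le> ln ((1 + sqrt t)^2)" by (subst ln_le_cancel_iff) auto
  also have "\<dots> = 2 * ln (1 + sqrt t)" using t by (simp add: ln_realpow)
  also have "\<dots> \<le> 2 * sqrt t" using t by (simp add: ln_add_one_self_le_self)
  finally show ?thesis .
qed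

lemma sqrt_exp_ln: "0 < t \<Longrightarrow> sqrt t = exp (ln t / 2)"
  by (simp add: powr_half_sqrt[symmetric] powr_def)

lemma ln1p_ln_le:
  fixes t :: real assumes t: "1 \<le> t"
  shows "ln (1 + t) * ln t \<le> 8 * sqrt t"
proof -
  define u where "u = ln t"
  have u0: "0 \<le> u" using t by (simp add: u_def)
  have "1 + u / 2 + (u / 2)^2 / 2 \<le> exp (u / 2)" using u0 by (intro exp_lower_Taylor_quadratic) simp
  then have e: "8 + 4 * u + u^2 \<le> 8 * sqrt t"
    using t by (simp add: sqrt_exp_ln u_def power2_eq_square field_simps)
  have "ln (1 + t) \<le> ln (2 * t)" using t by simp
  also have "\<dots> = ln 2 + u" using t by (simp add: ln_mult u_def)
  also have "\<dots> \<le> 1 + u" using ln_2_less_1 by simp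
  finally have l: "ln (1 + t) \<le> 1 + u" .
  have "ln (1 + t) * ln t \<le> (1 + u) * u" unfolding u_def[symmetric] using l u0 by (intro mult_right_mono) auto
  also have "\<dots> \<le> 8 + 4 * u + u^2" using u0 by (simp add: power2_eq_square algebra_simps)
  finally show ?thesis using e by simp
qed

lemma LL_bound:
  fixes n j :: real assumes n: "3 \<le> n" and j: "n \<le> j"
  shows "ln j * ln (1 + j / n) \<le> 10 * sqrt (j / n) * ln n"
proof -
  define t where "t = j / n"
  have t1: "1 \<le> t" using n j by (simp add: t_def)
  have lnn: "1 \<le> ln n"
  proof -
    have "exp 1 \<le> (3::real)" using exp_le by simp
    then have "exp 1 \<le> n" using n by simp
    then show ?thesis using n by (simp add: ln_ge_iff)
  qed
  have jt: "j = n * t" using n by (simp add: t_def)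
  have "ln j = ln n + ln t" using n t1 by (simp add: jt ln_mult)
  then have "ln j * ln (1 + t) = ln n * ln (1 + t) + ln (1 + t) * ln t" by (simp add: algebra_simps)
  also have "\<dots> \<le> ln n * (2 * sqrt t) + 8 * sqrt t"
    using ln1p_le_2sqrt[of t] ln1p_ln_le[OF t1] t1 lnn by (intro add_mono mult_left_mono) auto
  also have "\<dots> \<le> 10 * sqrt t * ln n" using lnn t1 by (simp add: algebra_simps)
  finally show ?thesis by (simp add: t_def)
qed

lemma tele_ineq:
  fixes x :: real assumes x: "2 \<le> x"
  shows "1 / (x * sqrt x) \<le> 2 / sqrt (x - 1) - 2 / sqrt x"
proof -
  define a where "a = sqrt (x - 1)"
  define b where "b = sqrt x"
  have a0: "0 < a" and b0: "0 < b" using x by (auto simp: a_def b_def)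
  have ab: "a \<le> b" using x by (simp add: a_def b_def)
  have sq: "b * b - a * a = 1" using x by (simp add: a_def b_def)
  have "2 / a - 2 / b = 2 * (b - a) / (a * b)" using a0 b0 by (simp add: field_simps)
  also have "b - a = 1 / (a + b)" using sq a0 b0 by (simp add: field_simps)
  finally have eq: "2 / a - 2 / b = 2 / (a * b * (a + b))" using a0 b0 by (simp add: field_simps)
  have "a * b * (a + b) \<le> b * b * (b + b)" using a0 b0 ab by (intro mult_mono add_mono) auto
  then have "2 / (b * b * (b + b)) \<le> 2 / (a * b * (a + b))" using a0 b0 by (intro divide_left_mono) auto
  moreover have "2 / (b * b * (b + b)) = 1 / (x * sqrt x)" using x b0 by (simp add: b_def field_simps)
  ultimately have "1 / (x * sqrt x) \<le> 2 / a - 2 / b" using eq by simp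
  then show ?thesis by (simp add: a_def b_def)
qed

lemma tail32:
  assumes n: "1 \<le> n"
  shows "summable (\<lambda>k. 1 / (real (k + n + 1) * sqrt (real (k + n + 1))))"
    and "(\<Sum>k. 1 / (real (k + n + 1) * sqrt (real (k + n + 1)))) \<le> 2 / sqrt n"
proof -
  define g where "g k = 2 / sqrt (real (k + n))" for k
  have "g \<longlonglongrightarrow> 0"
  proof -
    have "filterlim (\<lambda>k. sqrt (real (k + n))) at_top sequentially"
      by (rule filterlim_compose[OF sqrt_at_top]) (rule filterlim_compose[OF filterlim_real_sequentially filterlim_add_const_nat_at_top])
    then have "(\<lambda>k. 2 / sqrt (real (k + n))) \<longlonglongrightarrow> 0"
      by (intro tendsto_divide_0[OF tendsto_const] filterlim_at_top_imp_at_infinity)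
    then show ?thesis unfolding g_def .
  qed
  then have tel: "(\<lambda>k. g k - g (Suc k)) sums (g 0 - 0)" by (rule telescope_sums')
  have le: "1 / (real (k + n + 1) * sqrt (real (k + n + 1))) \<le> g k - g (Suc k)" for k
  proof -
    have "1 / (real (k + n + 1) * sqrt (real (k + n + 1))) \<le> 2 / sqrt (real (k + n + 1) - 1) - 2 / sqrt (real (k + n + 1))"
      using n by (intro tele_ineq) simp
    then show ?thesis by (simp add: g_def add_ac)
  qed
  show summ: "summable (\<lambda>k. 1 / (real (k + n + 1) * sqrt (real (k + n + 1))))"
    by (rule summable_comparison_test'[OF sums_summable[OF tel], of 0]) (use le in auto)
  have "(\<Sum>k. 1 / (real (k + n + 1) * sqrt (real (k + n + 1)))) \<le> g 0 - 0"
    by (rule sums_le[OF le summable_sums[OF summ] tel])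
  then show "(\<Sum>k. 1 / (real (k + n + 1) * sqrt (real (k + n + 1)))) \<le> 2 / sqrt n" by (simp add: g_def)
qed

lemma mu_bound:
  fixes mu :: "nat \<Rightarrow> real"
  assumes C1: "mu \<sim>[at_top] (\<lambda>n. b * ln (real n) powr \<alpha> / real n ^ 2)" and al: "\<alpha> \<le> 1"
  shows "\<exists>C K. 0 \<le> C \<and> 3 \<le> K \<and> (\<forall>k\<ge>K. mu k \<le> C * ln (real k) / (real k)^2)"
proof -
  have "eventually (\<lambda>k. norm (mu k) \<le> 2 * norm (b * ln (real k) powr \<alpha> / real k ^ 2)) at_top"
    by (rule asymp_equiv_imp_eventually_le[OF C1]) simp
  then obtain K0 where K0: "\<And>k. k \<ge> K0 \<Longrightarrow> norm (mu k) \<le> 2 * norm (b * ln (real k) powr \<alpha> / real k ^ 2)"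
    by (auto simp: eventually_at_top_linorder)
  define K where "K = max K0 3"
  have "mu k \<le> (2 * \<bar>b\<bar>) * ln (real k) / (real k)^2" if k: "k \<ge> K" for k
  proof -
    have k3: "3 \<le> real k" using k by (simp add: K_def)
    have lnk: "1 \<le> ln (real k)"
    proof -
      have "exp 1 \<le> (3::real)" using exp_le by simp
      then have "exp 1 \<le> real k" using k3 by simp
      then show ?thesis using k3 by (simp add: ln_ge_iff)
    qed
    have pw: "ln (real k) powr \<alpha> \<le> ln (real k)"
      using powr_mono[OF al lnk] lnk by simp
    have "mu k \<le> norm (mu k)" by simp
    also have "\<dots> \<le> 2 * norm (b * ln (real k) powr \<alpha> / real k ^ 2)" using K0 k by (simp add: K_def)
    also have "\<dots> = 2 * \<bar>b\<bar> * (ln (real k) powr \<alpha>) / real k ^ 2" using k3 lnk by (simp add: abs_mult)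
    also have "\<dots> \<le> 2 * \<bar>b\<bar> * ln (real k) / real k ^ 2"
      using pw by (intro divide_right_mono mult_left_mono) auto
    finally show ?thesis .
  qed
  then show ?thesis by (intro exI[of _ "2 * \<bar>b\<bar>"] exI[of _ K]) (auto simp: K_def)
qed

locale mucond =
  fixes mu :: "nat \<Rightarrow> real" and C :: real and K :: nat
  assumes mu_nonneg: "\<And>k. 0 \<le> mu k"
    and C0: "0 \<le> C" and K3: "3 \<le> K"
    and mub: "\<And>k. k \<ge> K \<Longrightarrow> mu k \<le> C * ln (real k) / (real k)^2"
begin

lemma sum32: "summable (\<lambda>k. 1 / (real (k + 1) * sqrt (real (k + 1))))"
proof -
  have "summable (\<lambda>k. 1 / (real (k + 1 + 1) * sqrt (real (k + 1 + 1))))"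
    using tail32(1)[of 1] by simp
  then have "summable (\<lambda>k. (\<lambda>k. 1 / (real (k + 1) * sqrt (real (k + 1)))) (k + 1))" by simp
  then show ?thesis by (subst (asm) summable_iff_shift)
qed

lemma SUM1: "summable (\<lambda>k. mu (k + 1) * ln (2 + real k))"
proof (rule summable_comparison_test'[where N=K])
  show "summable (\<lambda>k. 8 * C * (1 / (real (k + 1) * sqrt (real (k + 1)))))"
    by (intro summable_mult sum32)
  fix k assume k: "K \<le> k"
  define j where "j = real (k + 1)"
  have j3: "3 \<le> j" using k K3 by (simp add: j_def)
  have "norm (mu (k + 1) * ln (2 + real k)) = mu (k + 1) * ln (1 + j)"
    using mu_nonneg[of "k+1"] by (simp add: j_def add_ac)
  also have "\<dots> \<le> C * ln j / j^2 * ln (1 + j)"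
    using mub[of "k+1"] k j3 by (intro mult_right_mono) (auto simp: j_def)
  also have "\<dots> = C / j^2 * (ln (1 + j) * ln j)" by (simp add: field_simps)
  also have "\<dots> \<le> C / j^2 * (8 * sqrt j)"
    using ln1p_ln_le[of j] j3 C0 by (intro mult_left_mono) auto
  also have "\<dots> = 8 * C * (1 / (j * sqrt j))"
    using j3 by (simp add: field_simps power2_eq_square)
  finally show "norm (mu (k + 1) * ln (2 + real k)) \<le> 8 * C * (1 / (real (k + 1) * sqrt (real (k + 1))))"
    by (simp add: j_def)
qed

lemma S2:
  assumes n: "1 \<le> n"
  shows "summable (\<lambda>k. mu (k + 1) * ln (1 + real (k + 1) / real n))"
proof (rule summable_comparison_test'[OF SUM1, where N=0])
  fix k :: nat
  have a: "0 \<le> ln (1 + real (k + 1) / real n)" using n by simp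
  have "real (k + 1) / real n \<le> real (k + 1)" using n by (simp add: divide_le_eq)
  then have "1 + real (k + 1) / real n \<le> 2 + real k" by simp
  then have "ln (1 + real (k + 1) / real n) \<le> ln (2 + real k)" using n
    by (subst ln_le_cancel_iff) (auto intro: add_pos_nonneg)
  then show "norm (mu (k + 1) * ln (1 + real (k + 1) / real n)) \<le> mu (k + 1) * ln (2 + real k)"
    using mu_nonneg[of "k+1"] a by (simp add: mult_left_mono)
qed


lemma TB:
  assumes n: "K \<le> n"
  shows "real n * (\<Sum>k. mu (k + n + 1) * ln (1 + real (k + n + 1) / real n)) \<le> 20 * C * ln n"
proof -
  have n3: "3 \<le> real n" using n K3 by simp
  define A where "A = 10 * C * ln n / sqrt n"
  have A0: "0 \<le> A" using n3 C0 by (simp add: A_def)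
  let ?a = "\<lambda>k. mu (k + n + 1) * ln (1 + real (k + n + 1) / real n)"
  let ?b = "\<lambda>k. A * (1 / (real (k + n + 1) * sqrt (real (k + n + 1))))"
  have ab: "?a k \<le> ?b k" for k
  proof -
    define j where "j = real (k + n + 1)"
    have jn: "real n \<le> j" by (simp add: j_def)
    have j3: "3 \<le> j" using jn n3 by simp
    have "?a k = mu (k + n + 1) * ln (1 + j / n)" by (simp add: j_def)
    also have "\<dots> \<le> C * ln j / j^2 * ln (1 + j / n)"
      using mub[of "k+n+1"] n j3 jn by (intro mult_right_mono) (auto simp: j_def)
    also have "\<dots> = C / j^2 * (ln j * ln (1 + j / n))" by (simp add: field_simps)
    also have "\<dots> \<le> C / j^2 * (10 * sqrt (j / n) * ln n)"
      using LL_bound[OF n3 jn] C0 by (intro mult_left_mono) auto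
    also have "\<dots> = A * (1 / (j * sqrt j))"
    proof -
      have "sqrt (j / n) = sqrt j / sqrt n" by (simp add: real_sqrt_divide)
      moreover have "j^2 = j * sqrt j * sqrt j" using j3 by (simp add: power2_eq_square)
      ultimately show ?thesis using j3 n3 by (simp add: A_def field_simps)
    qed
    finally show ?thesis by (simp add: j_def)
  qed
  have sb: "summable ?b" using tail32(1)[of n] n3 by (intro summable_mult) simp
  have sa: "summable ?a"
    by (rule summable_comparison_test'[OF sb, where N=0]) (use ab mu_nonneg n3 in \<open>auto intro!: mult_nonneg_nonneg\<close>)
  have "(\<Sum>k. ?a k) \<le> (\<Sum>k. ?b k)" by (rule suminf_le[OF ab sa sb])
  also have "\<dots> = A * (\<Sum>k. 1 / (real (k + n + 1) * sqrt (real (k + n + 1))))"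
    using tail32(1)[of n] n3 by (intro suminf_mult) simp
  also have "\<dots> \<le> A * (2 / sqrt n)"
    using tail32(2)[of n] n3 A0 by (intro mult_left_mono) auto
  finally have "real n * (\<Sum>k. ?a k) \<le> real n * (A * (2 / sqrt n))" using n3 by (intro mult_left_mono) auto
  also have "\<dots> = 20 * C * ln n"
  proof -
    have "sqrt (real n) * sqrt (real n) = real n" using n3 by simp
    then show ?thesis using n3 by (simp add: A_def field_simps)
  qed
  finally show ?thesis .
qed

lemma R_split:
  assumes n: "1 \<le> n"
  shows "real n * (\<Sum>k. mu (k + 1) * ln (1 + real (k + 1) / real n))
     \<le> Phi_mu mu n / real n + real n * (\<Sum>k. mu (k + n + 1) * ln (1 + real (k + n + 1) / real n))"
proof -
  let ?f = "\<lambda>k. mu (k + 1) * ln (1 + real (k + 1) / real n)"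
  have "(\<Sum>k. ?f k) = (\<Sum>k. ?f (k + n)) + (\<Sum>i<n. ?f i)"
    by (rule suminf_split_initial_segment[OF S2[OF n]])
  moreover have "(\<lambda>k. ?f (k + n)) = (\<lambda>k. mu (k + n + 1) * ln (1 + real (k + n + 1) / real n))"
    by (simp add: add_ac)
  moreover have "real n * (\<Sum>i<n. ?f i) \<le> Phi_mu mu n / real n"
  proof -
    have "real n * (\<Sum>i<n. ?f i) = (\<Sum>i<n. mu (i + 1) * (real n * ln (1 + real (i + 1) / real n)))"
      by (simp add: sum_distrib_left mult_ac)
    also have "\<dots> \<le> (\<Sum>i<n. mu (i + 1) * real (i + 1))"
    proof (intro sum_mono mult_left_mono mu_nonneg)
      fix i
      have "ln (1 + real (i + 1) / real n) \<le> real (i + 1) / real n"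
        by (rule ln_add_one_self_le_self) simp
      then have "real n * ln (1 + real (i + 1) / real n) \<le> real n * (real (i + 1) / real n)"
        using n by (intro mult_left_mono) auto
      then show "real n * ln (1 + real (i + 1) / real n) \<le> real (i + 1)" using n by simp
    qed
    also have "\<dots> = (\<Sum>k=1..n. real k * mu k)"
      using sum_bounds_lt_plus1[of "\<lambda>k. real k * mu k" n] by (simp add: mult.commute)
    also have "\<dots> = Phi_mu mu n / real n" using n by (simp add: Phi_mu_def)
    finally show ?thesis .
  qed
  ultimately show ?thesis by (simp add: distrib_left)
qed

end

lemma lam_nonneg: "0 \<le> lam_coef Lam n k"
  unfolding lam_coef_def set_lebesgue_integral_def
  by (intro integral_nonneg_AE AE_I2) (auto simp: indicator_def)

lemma rate_nonneg: "(\<And>k. 0 \<le> mu k) \<Longrightarrow> 0 \<le> bc_rate Lam mu n y"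
  unfolding bc_rate_def using lam_nonneg by auto

lemma Phi_Lam_nonneg: "0 \<le> Phi_Lam Lam n"
  unfolding Phi_Lam_def using lam_nonneg by (intro sum_nonneg mult_nonneg_nonneg) auto

lemma rate_split:
  fixes W :: "nat \<Rightarrow> real"
  assumes n: "1 \<le> n" and summ: "summable (\<lambda>k. mu (k + 1) * W (n + k + 1))"
  shows "summable (\<lambda>y. bc_rate Lam mu n y * W y)"
    and "(\<Sum>y. bc_rate Lam mu n y * W y) =
        (\<Sum>k=2..n. real (n choose k) * lam_coef Lam n k * W (n - k + 1))
        + real n * (\<Sum>k. mu (k + 1) * W (n + k + 1))"
proof -
  let ?f = "\<lambda>y. bc_rate Lam mu n y * W y"
  have shift: "?f (k + (n + 1)) = real n * (mu (k + 1) * W (n + k + 1))" for k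
    by (simp add: bc_rate_def add_ac)
  have "summable (\<lambda>k. real n * (mu (k + 1) * W (n + k + 1)))"
    by (rule summable_mult[OF summ])
  then have s1: "summable (\<lambda>k. ?f (k + (n + 1)))" by (simp only: shift)
  then show sf: "summable ?f" by (subst (asm) summable_iff_shift)
  have "(\<Sum>y. ?f y) = (\<Sum>k. ?f (k + (n + 1))) + (\<Sum>i<n + 1. ?f i)"
    by (rule suminf_split_initial_segment[OF sf])
  also have "(\<Sum>k. ?f (k + (n + 1))) = real n * (\<Sum>k. mu (k + 1) * W (n + k + 1))"
    by (simp only: shift suminf_mult[OF summ])
  also have "(\<Sum>i<n + 1. ?f i) = (\<Sum>i\<in>{1..<n}. ?f i)"
  proof (rule sum.mono_neutral_right)
    show "{1..<n} \<subseteq> {..<n + 1}" by auto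
    show "\<forall>i\<in>{..<n + 1} - {1..<n}. ?f i = 0" by (auto simp: bc_rate_def)
  qed simp
  also have "\<dots> = (\<Sum>k=2..n. real (n choose k) * lam_coef Lam n k * W (n - k + 1))"
  proof (rule sum.reindex_bij_witness[where i = "\<lambda>k. n - k + 1" and j = "\<lambda>y. n - y + 1"])
    fix a assume a: "a \<in> {1..<n}"
    then show "n - (n - a + 1) + 1 = a" by auto
    show "n - a + 1 \<in> {2..n}" using a by auto
    show "real (n choose (n - a + 1)) * lam_coef Lam n (n - a + 1) * W (n - (n - a + 1) + 1) = ?f a"
      using a by (auto simp: bc_rate_def)
  next
    fix b assume b: "b \<in> {2..n}"
    then show "n - (n - b + 1) + 1 = b" by auto
    show "n - b + 1 \<in> {1..<n}" using b by auto
  qed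
  finally show "(\<Sum>y. ?f y) = (\<Sum>k=2..n. real (n choose k) * lam_coef Lam n k * W (n - k + 1))
        + real n * (\<Sum>k. mu (k + 1) * W (n + k + 1))" by simp
qed

locale anl = mucond mu C K for mu :: "nat \<Rightarrow> real" and C K +
  fixes Lam :: "real measure" and m :: nat and r :: real and N1 :: nat
  assumes summu: "summable (\<lambda>k. mu (Suc k))"
    and m1: "1 \<le> m"
    and Nb: "\<And>n. n \<ge> N1 \<Longrightarrow> (\<forall>j\<le>m. 0 < (ln ^^ j) (real n)) \<and>
        r < (Phi_Lam Lam n - Phi_mu mu n) / (\<Prod>l\<le>m. (ln ^^ l) (real n))"
begin

definition WW :: "nat \<Rightarrow> real" where "WW n = 1 + GG m (ln (real n))"

abbreviation "Dn n \<equiv> DD m (ln (real n))"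

lemma WW_ge1: "1 \<le> n \<Longrightarrow> 1 \<le> WW n"
  unfolding WW_def using GG_nonneg[of "ln (real n)" m] by simp

lemma Dn_nonneg: "1 \<le> n \<Longrightarrow> 0 \<le> Dn n"
  by (rule DD_nonneg) simp

lemma Dn_le1: "1 \<le> n \<Longrightarrow> Dn n \<le> 1"
  by (rule DD_le1) simp

lemma WW_tangent: "1 \<le> n \<Longrightarrow> 1 \<le> j \<Longrightarrow> WW j \<le> WW n + Dn n * (ln (real j) - ln (real n))"
  using GG_tangent[of "ln (real n)" "ln (real j)" m] unfolding WW_def by simp

lemma WW_lim: "filterlim WW at_top sequentially"
proof -
  have "filterlim (\<lambda>n. ln (real n)) at_top sequentially"
    by (rule filterlim_compose[OF ln_at_top filterlim_real_sequentially])
  then have "filterlim (\<lambda>n. GG m (ln (real n))) at_top sequentially"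
    by (rule filterlim_compose[OF GG_at_top])
  then show ?thesis unfolding WW_def
    by (rule filterlim_tendsto_add_at_top[OF tendsto_const])
qed

definition RR :: "nat \<Rightarrow> real" where
  "RR n = real n * (\<Sum>k. mu (k + 1) * ln (1 + real (k + 1) / real n))"

lemma RR_nonneg: "1 \<le> n \<Longrightarrow> 0 \<le> RR n"
  unfolding RR_def using S2 mu_nonneg
  by (intro mult_nonneg_nonneg suminf_nonneg) auto

lemma coal_bound:
  assumes n: "1 \<le> n"
  shows "(\<Sum>k=2..n. real (n choose k) * lam_coef Lam n k * WW (n - k + 1))
     \<le> WW n * (\<Sum>k=2..n. real (n choose k) * lam_coef Lam n k) - Dn n * Phi_Lam Lam n / real n"
proof -
  have "(\<Sum>k=2..n. real (n choose k) * lam_coef Lam n k * WW (n - k + 1))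
     \<le> (\<Sum>k=2..n. real (n choose k) * lam_coef Lam n k * (WW n - Dn n * ((real k - 1) / real n)))"
  proof (intro sum_mono mult_left_mono)
    fix k assume k: "k \<in> {2..n}"
    have rk: "real (n - k + 1) = real n - real k + 1" using k by (simp add: of_nat_diff)
    have a: "WW (n - k + 1) \<le> WW n + Dn n * (ln (real (n - k + 1)) - ln (real n))"
      using n k by (intro WW_tangent) auto
    have "ln (real (n - k + 1)) - ln (real n) \<le> (real (n - k + 1) - real n) / real n"
      using n k by (intro ln_diff_le_div) auto
    then have b: "Dn n * (ln (real (n - k + 1)) - ln (real n)) \<le> Dn n * ((real (n - k + 1) - real n) / real n)"
      using Dn_nonneg[OF n] by (intro mult_left_mono) auto
    have e: "Dn n * ((real (n - k + 1) - real n) / real n) = - (Dn n * ((real k - 1) / real n))"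
      unfolding rk by (simp add: algebra_simps diff_divide_distrib)
    show "WW (n - k + 1) \<le> WW n - Dn n * ((real k - 1) / real n)"
      using a b e by linarith
    show "0 \<le> real (n choose k) * lam_coef Lam n k" using lam_nonneg by simp
  qed
  also have "\<dots> = WW n * (\<Sum>k=2..n. real (n choose k) * lam_coef Lam n k)
      - Dn n / real n * (\<Sum>k=2..n. real (n choose k) * lam_coef Lam n k * (real k - 1))"
  proof -
    have "(\<Sum>k=2..n. real (n choose k) * lam_coef Lam n k * (WW n - Dn n * ((real k - 1) / real n)))
       = (\<Sum>k=2..n. WW n * (real (n choose k) * lam_coef Lam n k) - Dn n / real n * (real (n choose k) * lam_coef Lam n k * (real k - 1)))"
      by (intro sum.cong refl) (simp add: algebra_simps diff_divide_distrib)
    also have "\<dots> = WW n * (\<Sum>k=2..n. real (n choose k) * lam_coef Lam n k)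
      - Dn n / real n * (\<Sum>k=2..n. real (n choose k) * lam_coef Lam n k * (real k - 1))"
      by (simp add: sum_subtractf sum_distrib_left)
    finally show ?thesis .
  qed
  also have "\<dots> = WW n * (\<Sum>k=2..n. real (n choose k) * lam_coef Lam n k) - Dn n * Phi_Lam Lam n / real n"
    by (simp add: Phi_Lam_def)
  finally show ?thesis .
qed

lemma frag_summ:
  assumes n: "1 \<le> n"
  shows "summable (\<lambda>k. mu (k + 1) * WW (n + k + 1))"
proof (rule summable_comparison_test'[where N=0])
  show "summable (\<lambda>k. WW n * mu (k + 1) + mu (k + 1) * ln (1 + real (k + 1) / real n))"
    using summu S2[OF n] by (intro summable_add summable_mult) auto
  fix k :: nat
  have lnq: "ln (real (n + k + 1)) - ln (real n) = ln (1 + real (k + 1) / real n)"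
  proof -
    have "1 + real (k + 1) / real n = real (n + k + 1) / real n" using n by (simp add: field_simps)
    then show ?thesis using n by (simp add: ln_div)
  qed
  have l0: "0 \<le> ln (1 + real (k + 1) / real n)" using n by simp
  have "WW (n + k + 1) \<le> WW n + Dn n * ln (1 + real (k + 1) / real n)"
    using WW_tangent[OF n, of "n + k + 1"] lnq by simp
  also have "\<dots> \<le> WW n + ln (1 + real (k + 1) / real n)"
    using Dn_le1[OF n] Dn_nonneg[OF n] l0 by (simp add: mult_left_le_one_le)
  finally have "WW (n + k + 1) \<le> WW n + ln (1 + real (k + 1) / real n)" .
  moreover have "0 \<le> WW (n + k + 1)" using WW_ge1[of "n + k + 1"] by simp
  ultimately have "mu (k + 1) * WW (n + k + 1) \<le> mu (k + 1) * (WW n + ln (1 + real (k + 1) / real n))"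
    "0 \<le> mu (k + 1) * WW (n + k + 1)"
    using mu_nonneg[of "k+1"] by (auto intro: mult_left_mono)
  then show "norm (mu (k + 1) * WW (n + k + 1)) \<le> WW n * mu (k + 1) + mu (k + 1) * ln (1 + real (k + 1) / real n)"
    by (simp add: algebra_simps)
qed

lemma frag_bound:
  assumes n: "1 \<le> n"
  shows "real n * (\<Sum>k. mu (k + 1) * WW (n + k + 1)) \<le> WW n * (real n * (\<Sum>k. mu (Suc k))) + Dn n * RR n"
proof -
  have le: "mu (k + 1) * WW (n + k + 1) \<le> WW n * mu (k + 1) + Dn n * (mu (k + 1) * ln (1 + real (k + 1) / real n))" for k
  proof -
    have lnq: "ln (real (n + k + 1)) - ln (real n) = ln (1 + real (k + 1) / real n)"
    proof -
    have "1 + real (k + 1) / real n = real (n + k + 1) / real n" using n by (simp add: field_simps)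
    then show ?thesis using n by (simp add: ln_div)
  qed
    have "WW (n + k + 1) \<le> WW n + Dn n * ln (1 + real (k + 1) / real n)"
      using WW_tangent[OF n, of "n + k + 1"] lnq by simp
    then have "mu (k + 1) * WW (n + k + 1) \<le> mu (k + 1) * (WW n + Dn n * ln (1 + real (k + 1) / real n))"
      using mu_nonneg[of "k+1"] by (intro mult_left_mono) auto
    then show ?thesis by (simp add: algebra_simps)
  qed
  have s2: "summable (\<lambda>k. WW n * mu (k + 1) + Dn n * (mu (k + 1) * ln (1 + real (k + 1) / real n)))"
    using summu S2[OF n] by (intro summable_add summable_mult) auto
  have "(\<Sum>k. mu (k + 1) * WW (n + k + 1)) \<le> (\<Sum>k. WW n * mu (k + 1) + Dn n * (mu (k + 1) * ln (1 + real (k + 1) / real n)))"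
    by (rule suminf_le[OF le frag_summ[OF n] s2])
  also have "\<dots> = WW n * (\<Sum>k. mu (Suc k)) + Dn n * (\<Sum>k. mu (k + 1) * ln (1 + real (k + 1) / real n))"
    using summu S2[OF n] by (subst suminf_add[symmetric]) (auto intro: summable_mult simp: suminf_mult)
  finally have "real n * (\<Sum>k. mu (k + 1) * WW (n + k + 1)) \<le> real n * (WW n * (\<Sum>k. mu (Suc k)) + Dn n * (\<Sum>k. mu (k + 1) * ln (1 + real (k + 1) / real n)))"
    by (intro mult_left_mono) auto
  then show ?thesis by (simp add: RR_def algebra_simps)
qed


lemma big_bound:
  assumes n: "max N1 K \<le> n"
  shows "Dn n * (RR n - Phi_Lam Lam n / real n) \<le> \<bar>r\<bar> + 20 * C"
proof -
  have n1: "1 \<le> n" and nK: "K \<le> n" and nN: "N1 \<le> n" using n K3 by auto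
  have rn: "1 \<le> real n" using n1 by simp
  have pos: "\<forall>j\<le>m. 0 < (ln ^^ j) (real n)" and rl: "r < (Phi_Lam Lam n - Phi_mu mu n) / (\<Prod>l\<le>m. (ln ^^ l) (real n))"
    using Nb[OF nN] by auto
  define Q where "Q = (\<Prod>l<m. (ln ^^ (Suc l)) (real n))"
  have Q0: "0 < Q" unfolding Q_def using pos by (intro prod_pos) (auto simp del: funpow.simps)
  have P: "(\<Prod>l\<le>m. (ln ^^ l) (real n)) = real n * Q"
    unfolding Q_def by (subst prod.atMost_shift) simp
  have P0: "0 < real n * Q" using Q0 rn by simp
  have "r * (real n * Q) < Phi_Lam Lam n - Phi_mu mu n" using rl P0 unfolding P by (simp add: pos_less_divide_eq)
  then have "Phi_mu mu n - Phi_Lam Lam n < - r * (real n * Q)" by simp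
  also have "\<dots> \<le> \<bar>r\<bar> * (real n * Q)" using P0 by (intro mult_right_mono) auto
  finally have d1: "(Phi_mu mu n - Phi_Lam Lam n) / real n \<le> \<bar>r\<bar> * Q" using rn by (simp add: field_simps)
  have "RR n \<le> Phi_mu mu n / real n + real n * (\<Sum>k. mu (k + n + 1) * ln (1 + real (k + n + 1) / real n))"
    unfolding RR_def by (rule R_split[OF n1])
  also have "\<dots> \<le> Phi_mu mu n / real n + 20 * C * ln n" using TB[OF nK] by simp
  finally have "RR n - Phi_Lam Lam n / real n \<le> (Phi_mu mu n - Phi_Lam Lam n) / real n + 20 * C * ln n"
    by (simp add: diff_divide_distrib)
  also have "\<dots> \<le> \<bar>r\<bar> * Q + 20 * C * ln n" using d1 by simp
  finally have "Dn n * (RR n - Phi_Lam Lam n / real n) \<le> Dn n * (\<bar>r\<bar> * Q + 20 * C * ln n)"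
    using Dn_nonneg[OF n1] by (intro mult_left_mono) auto
  also have "\<dots> = \<bar>r\<bar> * (Dn n * Q) + 20 * C * (Dn n * ln n)" by (simp add: algebra_simps)
  also have "\<dots> \<le> \<bar>r\<bar> * 1 + 20 * C * 1"
  proof (intro add_mono mult_left_mono)
    show "Dn n * Q \<le> 1" unfolding Q_def using pos by (intro DD_prod_le) auto
    have "Dn n \<le> 1 / (1 + ln (real n))" using m1 rn by (intro DD_le_inv) auto
    then have "Dn n * ln n \<le> 1 / (1 + ln (real n)) * ln n" using rn by (intro mult_right_mono) auto
    also have "\<dots> \<le> 1"
    proof -
      have l0: "0 \<le> ln (real n)" using rn by simp
      then have "ln (real n) \<le> 1 + ln (real n)" by simp
      then show ?thesis using l0 by simp
    qed
    finally show "Dn n * ln n \<le> 1" .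
  qed (use C0 in auto)
  finally show ?thesis by simp
qed

lemma c_bound: "\<exists>c\<ge>0. \<forall>n\<ge>1. Dn n * (RR n - Phi_Lam Lam n / real n) \<le> c"
proof -
  define N where "N = max N1 K"
  define c where "c = \<bar>r\<bar> + 20 * C + Max (insert 0 (RR ` {..<N}))"
  have M0: "0 \<le> Max (insert 0 (RR ` {..<N}))" by (intro Max_ge) auto
  show ?thesis
  proof (intro exI[of _ c] conjI allI impI)
    show "0 \<le> c" unfolding c_def using M0 C0 by simp
    fix n :: nat assume n1: "1 \<le> n"
    show "Dn n * (RR n - Phi_Lam Lam n / real n) \<le> c"
    proof (cases "N \<le> n")
      case True
      then have "Dn n * (RR n - Phi_Lam Lam n / real n) \<le> \<bar>r\<bar> + 20 * C"
        unfolding N_def by (rule big_bound)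
      then show ?thesis unfolding c_def using M0 by linarith
    next
      case False
      have "Dn n * (RR n - Phi_Lam Lam n / real n) \<le> Dn n * RR n"
        using Dn_nonneg[OF n1] Phi_Lam_nonneg[of Lam n] by (intro mult_left_mono) auto
      also have "\<dots> \<le> RR n" using Dn_le1[OF n1] Dn_nonneg[OF n1] RR_nonneg[OF n1]
        by (simp add: mult_left_le_one_le)
      also have "\<dots> \<le> Max (insert 0 (RR ` {..<N}))" using False by (intro Max_ge) auto
      finally show ?thesis unfolding c_def using C0 by simp
    qed
  qed
qed

lemma rate_ineq:
  assumes n: "1 \<le> n" and c: "\<forall>n\<ge>1. Dn n * (RR n - Phi_Lam Lam n / real n) \<le> c" and c0: "0 \<le> c"
  shows "summable (\<lambda>y. bc_rate Lam mu n y * WW y)"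
    and "(\<Sum>y. bc_rate Lam mu n y * WW y) \<le> (bc_total_rate Lam mu n + c) * WW n"
proof -
  show "summable (\<lambda>y. bc_rate Lam mu n y * WW y)" by (rule rate_split(1)[OF n frag_summ[OF n]])
  have "(\<Sum>y. bc_rate Lam mu n y * WW y) =
        (\<Sum>k=2..n. real (n choose k) * lam_coef Lam n k * WW (n - k + 1))
        + real n * (\<Sum>k. mu (k + 1) * WW (n + k + 1))"
    by (rule rate_split(2)[OF n frag_summ[OF n]])
  also have "\<dots> \<le> (WW n * (\<Sum>k=2..n. real (n choose k) * lam_coef Lam n k) - Dn n * Phi_Lam Lam n / real n)
      + (WW n * (real n * (\<Sum>k. mu (Suc k))) + Dn n * RR n)"
    by (intro add_mono coal_bound[OF n] frag_bound[OF n])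
  also have "\<dots> = bc_total_rate Lam mu n * WW n + Dn n * (RR n - Phi_Lam Lam n / real n)"
    by (simp add: bc_total_rate_def algebra_simps)
  also have "\<dots> \<le> bc_total_rate Lam mu n * WW n + c" using c n by simp
  also have "\<dots> \<le> (bc_total_rate Lam mu n + c) * WW n"
    using WW_ge1[OF n] c0 by (simp add: distrib_right mult_left_le_one_le) (simp add: mult_le_cancel_left1)
  finally show "(\<Sum>y. bc_rate Lam mu n y * WW y) \<le> (bc_total_rate Lam mu n + c) * WW n" .
qed


lemma WW_ge1': "1 \<le> WW n"
  unfolding WW_def using GG_nonneg[of "ln (real n)" m] by (cases "n = 0") auto

lemma q_nonneg: "0 \<le> bc_total_rate Lam mu n"
  unfolding bc_total_rate_def using lam_nonneg summu mu_nonneg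
  by (intro add_nonneg_nonneg sum_nonneg mult_nonneg_nonneg suminf_nonneg) auto

lemma super:
  assumes c: "\<forall>n\<ge>1. Dn n * (RR n - Phi_Lam Lam n / real n) \<le> c" and c0: "0 \<le> c"
  shows "ennreal (1 / (1 + c / bc_total_rate Lam mu x)) *
      (\<Sum>y. ennreal (bc_jump_prob Lam mu x y) * ennreal (WW y)) \<le> ennreal (WW x)"
proof (cases "bc_total_rate Lam mu x > 0")
  case False
  then have q0: "bc_total_rate Lam mu x = 0" using q_nonneg[of x] by simp
  have "(\<Sum>y. ennreal (bc_jump_prob Lam mu x y) * ennreal (WW y)) = (\<Sum>y\<in>{x}. ennreal (bc_jump_prob Lam mu x y) * ennreal (WW y))"
    by (intro suminf_finite) (auto simp: bc_jump_prob_def q0)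
  then show ?thesis by (simp add: q0 bc_jump_prob_def)
next
  case True
  define qx where "qx = bc_total_rate Lam mu x"
  have qx: "0 < qx" using True by (simp add: qx_def)
  have x1: "1 \<le> x"
  proof (rule ccontr)
    assume "\<not> 1 \<le> x"
    then have "x = 0" by simp
    then show False using True by (simp add: bc_total_rate_def)
  qed
  define f where "f y = bc_rate Lam mu x y * WW y / qx" for y
  have sf: "summable f" unfolding f_def by (intro summable_divide rate_ineq(1)[OF x1 c c0])
  have S: "(\<Sum>y. bc_rate Lam mu x y * WW y) \<le> (qx + c) * WW x"
    unfolding qx_def by (rule rate_ineq(2)[OF x1 c c0])
  have fnn: "0 \<le> f y" for y unfolding f_def using rate_nonneg[of mu Lam x y, OF mu_nonneg] WW_ge1'[of y] qx by simp
  have "(\<Sum>y. ennreal (bc_jump_prob Lam mu x y) * ennreal (WW y)) = (\<Sum>y. ennreal (f y))"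
  proof (intro suminf_cong)
    fix y
    have "0 \<le> bc_rate Lam mu x y / qx" using rate_nonneg[of mu Lam x y, OF mu_nonneg] qx by simp
    then show "ennreal (bc_jump_prob Lam mu x y) * ennreal (WW y) = ennreal (f y)"
      using True WW_ge1'[of y] by (simp add: bc_jump_prob_def f_def qx_def ennreal_mult'[symmetric])
  qed
  also have "\<dots> = ennreal (\<Sum>y. f y)"
  proof -
    have "f sums suminf f" by (rule summable_sums[OF sf])
    then have "(\<lambda>i. ennreal (f i)) sums ennreal (suminf f)"
      using fnn suminf_nonneg[OF sf fnn] by (subst sums_ennreal) auto
    then show ?thesis by (rule sums_unique[symmetric])
  qed
  also have "(\<Sum>y. f y) = (\<Sum>y. bc_rate Lam mu x y * WW y) / qx"
    unfolding f_def by (rule suminf_divide[OF rate_ineq(1)[OF x1 c c0]])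
  finally have eq: "(\<Sum>y. ennreal (bc_jump_prob Lam mu x y) * ennreal (WW y)) = ennreal ((\<Sum>y. bc_rate Lam mu x y * WW y) / qx)" .
  have Snn: "0 \<le> (\<Sum>y. bc_rate Lam mu x y * WW y) / qx" using suminf_nonneg[OF sf fnn] suminf_divide[OF rate_ineq(1)[OF x1 c c0], of qx]
    by (simp add: f_def)
  have "ennreal (1 / (1 + c / qx)) * ennreal ((\<Sum>y. bc_rate Lam mu x y * WW y) / qx)
      = ennreal ((\<Sum>y. bc_rate Lam mu x y * WW y) / (qx + c))"
  proof -
    have gen: "1 / (1 + c / qx) * (T / qx) = T / (qx + c)" for T :: real
    proof -
      have "1 + c / qx = (qx + c) / qx" using qx by (simp add: field_simps)
      then show ?thesis using qx c0 by simp
    qed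
    have r: "1 / (1 + c / qx) * ((\<Sum>y. bc_rate Lam mu x y * WW y) / qx) = (\<Sum>y. bc_rate Lam mu x y * WW y) / (qx + c)"
      by (rule gen)
    have "0 \<le> 1 / (1 + c / qx)" using qx c0 by simp
    then show ?thesis by (simp only: ennreal_mult'[symmetric] r)
  qed
  also have "\<dots> \<le> ennreal (WW x)"
  proof (rule ennreal_leI)
    have "0 < qx + c" using qx c0 by simp
    then show "(\<Sum>y. bc_rate Lam mu x y * WW y) / (qx + c) \<le> WW x"
      using S by (simp only: pos_divide_le_eq mult.commute)
  qed
  finally show ?thesis unfolding eq qx_def .
qed

end

theorem theorem2p2:
  fixes Lam :: "real measure" and mu :: "nat \<Rightarrow> real" and b \<alpha> :: real
    and M :: "nat \<Rightarrow> 'w measure" and X :: "nat \<Rightarrow> nat \<Rightarrow> 'w \<Rightarrow> nat"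
    and E :: "nat \<Rightarrow> nat \<Rightarrow> 'w \<Rightarrow> real"
  assumes Lam_finite: "finite_measure Lam"
    and Lam_sets: "sets Lam = sets borel"
    and Lam_supp: "emeasure Lam (- {0..1}) = 0"
    and Lam_one: "emeasure Lam {1} = 0"
    and Lam_ac: "absolutely_continuous lborel Lam"
    and mu_nonneg: "\<And>k. 0 \<le> mu k"
    and mu_finite: "summable (\<lambda>k. mu (Suc k))"
    and C1: "mu \<sim>[at_top] (\<lambda>n. b * ln (real n) powr \<alpha> / real n ^ 2)"
    and b_pos: "b > 0"
    and alpha: "0 < \<alpha>" "\<alpha> \<le> 1"
    and N_process: "\<And>n0. n0 \<ge> 1 \<Longrightarrow> bc_realization Lam mu n0 (M n0) (X n0) (E n0)"
    and liminf_cond: "\<exists>m::nat. m \<ge> 1 \<and>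
        liminf (\<lambda>n. ereal ((Phi_Lam Lam n - Phi_mu mu n) / (\<Prod>l\<le>m. (ln ^^ l) (real n)))) > -\<infinity>"
  shows "\<not> bc_explodes Lam mu M X E"
proof
  assume expl: "bc_explodes Lam mu M X E"
  obtain m :: nat where m1: "m \<ge> 1"
    and lim: "liminf (\<lambda>n. ereal ((Phi_Lam Lam n - Phi_mu mu n) / (\<Prod>l\<le>m. (ln ^^ l) (real n)))) > -\<infinity>"
    using liminf_cond by blast
  obtain r :: real where r: "ereal r < liminf (\<lambda>n. ereal ((Phi_Lam Lam n - Phi_mu mu n) / (\<Prod>l\<le>m. (ln ^^ l) (real n))))"
  proof (cases "liminf (\<lambda>n. ereal ((Phi_Lam Lam n - Phi_mu mu n) / (\<Prod>l\<le>m. (ln ^^ l) (real n))))")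
    case (real a)
    then show ?thesis using that[of "a - 1"] by simp
  next
    case PInf
    then show ?thesis using that[of 0] by simp
  next
    case MInf
    then show ?thesis using lim by simp
  qed
  have ev1: "eventually (\<lambda>n. r < (Phi_Lam Lam n - Phi_mu mu n) / (\<Prod>l\<le>m. (ln ^^ l) (real n))) sequentially"
    using less_LiminfD[OF r] by simp
  have "eventually (\<lambda>n. (\<forall>j\<le>m. 0 < (ln ^^ j) (real n)) \<and>
        r < (Phi_Lam Lam n - Phi_mu mu n) / (\<Prod>l\<le>m. (ln ^^ l) (real n))) sequentially"
    using iter_ln_pos_ev[of m] ev1 by (rule eventually_conj)
  then obtain N1 where N1: "\<And>n. n \<ge> N1 \<Longrightarrow> (\<forall>j\<le>m. 0 < (ln ^^ j) (real n)) \<and>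
        r < (Phi_Lam Lam n - Phi_mu mu n) / (\<Prod>l\<le>m. (ln ^^ l) (real n))"
    by (auto simp: eventually_sequentially)
  obtain C K where CK: "0 \<le> C" "3 \<le> K" "\<And>k. k \<ge> K \<Longrightarrow> mu k \<le> C * ln (real k) / (real k)^2"
    using mu_bound[OF C1 alpha(2)] by blast
  interpret A: anl mu C K Lam m r N1
    by unfold_locales (use mu_nonneg CK mu_finite m1 N1 in auto)
  obtain c where c0: "0 \<le> c" and cb: "\<forall>n\<ge>1. A.Dn n * (A.RR n - Phi_Lam Lam n / real n) \<le> c"
    using A.c_bound by blast
  have cb': "\<forall>n\<ge>1. A.Dn n * (A.RR n - Phi_Lam Lam n / real n) \<le> c + 1" using cb by force
  have real1: "bc_realization Lam mu 1 (M 1) (X 1) (E 1)" by (rule N_process) simp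
  interpret B: bcchain "M 1" "X 1" "E 1" "bc_jump_prob Lam mu" 1
  proof -
    have pj: "0 \<le> bc_jump_prob Lam mu x y" for x y
      unfolding bc_jump_prob_def using rate_nonneg[of mu Lam x y, OF mu_nonneg] A.q_nonneg[of x] by auto
    show "bcchain (M 1) (X 1) (E 1) (bc_jump_prob Lam mu) 1"
      using real1 pj unfolding bc_realization_def bcchain_def bcchain_axioms_def by blast
  qed
  have "measure (M 1) {\<omega>\<in>space (M 1). (\<forall>k. 0 < bc_total_rate Lam mu (X 1 k \<omega>)) \<and>
      summable (\<lambda>k. E 1 k \<omega> / bc_total_rate Lam mu (X 1 k \<omega>))} = 0"
  proof (rule B.no_explosion)
    show "\<And>x. 0 \<le> bc_total_rate Lam mu x" by (rule A.q_nonneg)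
    show "0 < c + 1" using c0 by simp
    show "\<And>x. 0 \<le> A.WW x" using A.WW_ge1' by (metis order_trans zero_le_one)
    show "filterlim A.WW at_top sequentially" by (rule A.WW_lim)
    show "\<And>x. ennreal (1 / (1 + (c + 1) / bc_total_rate Lam mu x)) *
        (\<Sum>y. ennreal (bc_jump_prob Lam mu x y) * ennreal (A.WW y)) \<le> ennreal (A.WW x)"
      using A.super[OF cb'] c0 by simp
  qed
  moreover have "measure (M 1) {\<omega>\<in>space (M 1). bc_explodes_on Lam mu (X 1) (E 1) \<omega>} = 1"
    using expl unfolding bc_explodes_def by simp
  ultimately show False unfolding bc_explodes_on_def by simp
qed

end
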